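(* Let $\mathscr P$ be a finite collection of finite posets. If $\sum_{P\in\mathscr P}K_P(\mathbf x)$ is a symmetric function, then it is $p$-positive, i.e. it is a linear combination of power sum symmetric functions $p_\lambda$ with nonnegative coefficients.
   Context: For a finite poset $P$, $K_P(\mathbf x)=\sum_f\prod_{x\in P}x_{f(x)}$, summed over all maps $f:P\to\mathbb Z_{>0}$ with $x<_Py\Rightarrow f(x)\le f(y)$; this is a quasisymmetric function in $\mathbf x=(x_1,x_2,\dots)$. $p_\lambda$ denotes the power sum symmetric function. *)

theory Defs
  imports Main "HOL-Library.Multiset" "HOL-Library.FuncSet" Complex_Main
begin

text \<open>Formal power series in the variables x_1, x_2, ... (indexed by positive
naturals) with real coefficients are represented by their coefficient function:
a monomial x_{i_1} x_{i_2} ... x_{i_k} is the multiset {#i_1,...,i_k#} of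
positive naturals, and a series F is the map sending a monomial to its
coefficient.\<close>

type_synonym series = "nat multiset \<Rightarrow> real"

definition K_poset :: "'a set \<Rightarrow> 'a rel \<Rightarrow> series" where
  "K_poset A R m = real (card {f \<in> A \<rightarrow>\<^sub>E {0<..}.
       (\<forall>x\<in>A. \<forall>y\<in>A. (x, y) \<in> R \<and> x \<noteq> y \<longrightarrow> f x \<le> f y)
       \<and> image_mset f (mset_set A) = m})"

definition series_mult :: "series \<Rightarrow> series \<Rightarrow> series" where
  "series_mult F G m = (\<Sum>m1\<in>{m1. m1 \<subseteq># m}. F m1 * G (m - m1))"

definition series_one :: series where
  "series_one m = (if m = {#} then 1 else 0)"

definition power_sum :: "nat \<Rightarrow> series" where
  "power_sum k m = (if \<exists>i>0. m = replicate_mset k i then 1 else 0)"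

fun power_sum_list :: "nat list \<Rightarrow> series" where
  "power_sum_list [] = series_one"
| "power_sum_list (k # ks) = series_mult (power_sum k) (power_sum_list ks)"

definition power_sum_part :: "nat multiset \<Rightarrow> series" where
  "power_sum_part lam = power_sum_list (sorted_list_of_multiset lam)"

definition is_partition :: "nat multiset \<Rightarrow> bool" where
  "is_partition lam \<longleftrightarrow> 0 \<notin># lam"

definition symmetric_series :: "series \<Rightarrow> bool" where
  "symmetric_series F \<longleftrightarrow>
     (\<forall>\<sigma>. bij_betw \<sigma> {0<..} {0<..} \<longrightarrow>
        (\<forall>m. set_mset m \<subseteq> {0<..} \<longrightarrow> F (image_mset \<sigma> m) = F m))"

definition p_positive :: "series \<Rightarrow> bool" where
  "p_positive F \<longleftrightarrow> (\<exists>S c. finite S \<and> (\<forall>lam\<in>S. is_partition lam \<and> c lam \<ge> (0::real))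
       \<and> F = (\<lambda>m. \<Sum>lam\<in>S. c lam * power_sum_part lam m))"

end

theory Submission
  imports Defs
begin

definition ordp :: "'a set \<Rightarrow> 'a rel \<Rightarrow> ('a \<Rightarrow> nat) \<Rightarrow> bool" where
  "ordp X R f \<longleftrightarrow> (\<forall>x\<in>X. \<forall>y\<in>X. (x, y) \<in> R \<and> x \<noteq> y \<longrightarrow> f x \<le> f y)"

definition msum :: "'a set \<Rightarrow> ('a \<Rightarrow> nat) \<Rightarrow> ('a \<Rightarrow> nat) \<Rightarrow> nat multiset" where
  "msum X w f = (\<Sum>x\<in>X. replicate_mset (w x) (f x))"

fun mfrom :: "nat \<Rightarrow> nat list \<Rightarrow> nat multiset" where
  "mfrom s [] = {#}"
| "mfrom s (b # bs) = replicate_mset b (Suc s) + mfrom (Suc s) bs"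

definition GSet :: "'a set \<Rightarrow> 'a rel \<Rightarrow> ('a \<Rightarrow> nat) \<Rightarrow> nat multiset \<Rightarrow> ('a \<Rightarrow> nat) set" where
  "GSet X R w m = {f \<in> X \<rightarrow>\<^sub>E UNIV. ordp X R f \<and> msum X w f = m}"

definition GS :: "'a set \<Rightarrow> 'a rel \<Rightarrow> ('a \<Rightarrow> nat) \<Rightarrow> nat multiset \<Rightarrow> nat" where
  "GS X R w m = card (GSet X R w m)"

definition Downs :: "'a set \<Rightarrow> 'a rel \<Rightarrow> 'a set set" where
  "Downs X R = {D. D \<subseteq> X \<and> (\<forall>x\<in>X. \<forall>y\<in>D. (x, y) \<in> R \<and> x \<noteq> y \<longrightarrow> x \<in> D)}"

lemma finite_Downs: "finite X \<Longrightarrow> finite (Downs X R)"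
  by (rule finite_subset[of _ "Pow X"]) (auto simp: Downs_def)

lemma mfrom_append: "mfrom s (xs @ ys) = mfrom s xs + mfrom (s + length xs) ys"
  by (induction xs arbitrary: s) auto

lemma set_mfrom: "x \<in># mfrom s xs \<Longrightarrow> s < x \<and> x \<le> s + length xs"
proof (induction xs arbitrary: s)
  case Nil then show ?case by simp
next
  case (Cons a xs)
  show ?case
  proof (cases "x \<in># mfrom (Suc s) xs")
    case True
    then show ?thesis using Cons.IH[of "Suc s"] by simp
  next
    case False
    then show ?thesis using Cons.prems by (simp split: if_splits)
  qed
qed

lemma size_mfrom: "size (mfrom s xs) = sum_list xs"
  by (induction xs arbitrary: s) auto

lemma mfrom_shift: "mfrom (s + t) xs = image_mset (\<lambda>v. v + t) (mfrom s xs)"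
proof (induction xs arbitrary: s)
  case Nil then show ?case by simp
next
  case (Cons a xs)
  then show ?case using Cons.IH[of "Suc s"] by simp
qed

lemma msum_mem:
  assumes "finite X" "x \<in> X" "w x > 0" shows "f x \<in># msum X w f"
proof -
  have "msum X w f = replicate_mset (w x) (f x) + msum (X - {x}) w f"
    unfolding msum_def using assms by (simp add: sum.remove)
  then show ?thesis using assms by simp
qed

lemma set_msum: "set_mset (msum X w f) \<subseteq> f ` X"
  unfolding msum_def
  by (induction X rule: infinite_finite_induct) (auto simp: set_mset_replicate_mset_subset split: if_splits)

lemma size_msum: "size (msum X w f) = sum w X"
  unfolding msum_def by (simp add: size_multiset_sum)

lemma msum_cong: "(\<And>x. x \<in> X \<Longrightarrow> f x = g x) \<Longrightarrow> msum X w f = msum X w g"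
  unfolding msum_def by (rule sum.cong) auto

lemma msum_split: "finite X \<Longrightarrow> D \<subseteq> X \<Longrightarrow> msum X w f = msum D w f + msum (X - D) w f"
  unfolding msum_def by (metis sum.subset_diff add.commute)

lemma filter_msum: "finite X \<Longrightarrow> filter_mset P (msum X w f) = msum {x\<in>X. P (f x)} w f"
  unfolding msum_def
proof (induction X rule: finite_induct)
  case empty
  then show ?case by simp
next
  case (insert x F)
  have r: "filter_mset P (replicate_mset n v) = (if P v then replicate_mset n v else {#})" for n v
    by (induction n) auto
  show ?case
  proof (cases "P (f x)")
    case True
    then have e: "{y \<in> insert x F. P (f y)} = insert x {y \<in> F. P (f y)}" by auto
    show ?thesis unfolding e using insert True r by (simp add: sum.insert)
  next
    case False
    then have e: "{y \<in> insert x F. P (f y)} = {y \<in> F. P (f y)}" by auto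
    show ?thesis unfolding e using insert False r by (simp add: sum.insert)
  qed
qed

lemma image_msum: "image_mset g (msum X w f) = msum X w (g \<circ> f)"
  unfolding msum_def
  by (induction X rule: infinite_finite_induct) auto

lemma finite_GSet:
  assumes "finite X" "\<forall>x\<in>X. w x > 0"
  shows "finite (GSet X R w m)"
proof (rule finite_subset)
  show "GSet X R w m \<subseteq> X \<rightarrow>\<^sub>E set_mset m"
    unfolding GSet_def using msum_mem[OF assms(1)] assms(2) by fastforce
  show "finite (X \<rightarrow>\<^sub>E set_mset m)" using assms by (simp add: finite_PiE)
qed

lemma filter_all: "(\<And>v. v \<in># M \<Longrightarrow> P v) \<Longrightarrow> filter_mset P M = M"
  by (induction M) auto

lemma filter_none: "(\<And>v. v \<in># M \<Longrightarrow> \<not> P v) \<Longrightarrow> filter_mset P M = {#}"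
  by (induction M) auto

lemma GS_split:
  assumes X: "finite X" and w: "\<forall>x\<in>X. w x > 0"
  shows "GS X R w (mfrom s (xs @ ys)) =
    (\<Sum>D\<in>Downs X R. GS D R w (mfrom s xs) * GS (X - D) R w (mfrom (s + length xs) ys))"
proof -
  define k where "k = s + length xs"
  define A where "A = mfrom s xs"
  define B where "B = mfrom k ys"
  have A: "\<And>v. v \<in># A \<Longrightarrow> v \<le> k" using set_mfrom unfolding A_def k_def by blast
  have B: "\<And>v. v \<in># B \<Longrightarrow> k < v" using set_mfrom unfolding B_def by blast
  have fA: "filter_mset (\<lambda>v. v \<le> k) (A + B) = A"
  proof -
    have "filter_mset (\<lambda>v. v \<le> k) B = {#}" by (rule filter_none) (use B in force)
    moreover have "filter_mset (\<lambda>v. v \<le> k) A = A" by (rule filter_all) (use A in auto)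
    ultimately show ?thesis by simp
  qed
  have fB: "filter_mset (\<lambda>v. \<not> v \<le> k) (A + B) = B"
  proof -
    have "filter_mset (\<lambda>v. \<not> v \<le> k) A = {#}" by (rule filter_none) (use A in auto)
    moreover have "filter_mset (\<lambda>v. \<not> v \<le> k) B = B" by (rule filter_all) (use B in force)
    ultimately show ?thesis by simp
  qed
  define S where "S = GSet X R w (A + B)"
  define T where "T = Sigma (Downs X R) (\<lambda>D. GSet D R w A \<times> GSet (X - D) R w B)"
  define \<Phi> where "\<Phi> = (\<lambda>f. ({x\<in>X. f x \<le> k}, restrict f {x\<in>X. f x \<le> k}, restrict f (X - {x\<in>X. f x \<le> k})))"
  define \<Psi> where "\<Psi> = (\<lambda>(D::'a set, f1::'a\<Rightarrow>nat, f2::'a\<Rightarrow>nat). (\<lambda>x. if x \<in> D then f1 x else f2 x))"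
  have bij: "bij_betw \<Phi> S T"
  proof (rule bij_betwI[where g=\<Psi>])
    show "\<Phi> \<in> S \<rightarrow> T"
    proof
      fix f assume f: "f \<in> S"
      let ?D = "{x\<in>X. f x \<le> k}"
      have fE: "f \<in> X \<rightarrow>\<^sub>E UNIV" and ord: "ordp X R f" and ms: "msum X w f = A + B"
        using f by (auto simp: S_def GSet_def)
      have D: "?D \<in> Downs X R" using ord unfolding Downs_def ordp_def by force
      have m1: "msum ?D w f = A" using filter_msum[OF X, of "\<lambda>v. v \<le> k" w f] ms fA by simp
      have e2: "X - ?D = {x\<in>X. \<not> f x \<le> k}" by auto
      have m2: "msum (X - ?D) w f = B" unfolding e2
        using filter_msum[OF X, of "\<lambda>v. \<not> v \<le> k" w f] ms fB by simp
      have o1: "ordp ?D R (restrict f ?D)" using ord unfolding ordp_def by auto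
      have o2: "ordp (X - ?D) R (restrict f (X - ?D))" using ord unfolding ordp_def by auto
      have m1': "msum ?D w (restrict f ?D) = A" using m1 msum_cong[of ?D "restrict f ?D" f w] by simp
      have m2': "msum (X - ?D) w (restrict f (X - ?D)) = B"
        using m2 msum_cong[of "X - ?D" "restrict f (X - ?D)" f w] by simp
      show "\<Phi> f \<in> T" unfolding \<Phi>_def T_def GSet_def using D o1 o2 m1' m2' by auto
    qed
    show "\<Psi> \<in> T \<rightarrow> S"
    proof
      fix t assume t: "t \<in> T"
      then obtain D f1 f2 where t: "t = (D, f1, f2)" and D: "D \<in> Downs X R"
        and f1: "f1 \<in> GSet D R w A" and f2: "f2 \<in> GSet (X - D) R w B" by (auto simp: T_def)
      let ?g = "\<lambda>x. if x \<in> D then f1 x else f2 x"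
      have DX: "D \<subseteq> X" using D by (simp add: Downs_def)
      have fD: "finite D" using DX X finite_subset by blast
      have v1: "f1 x \<le> k" if "x \<in> D" for x
      proof -
        have "f1 x \<in># msum D w f1" using msum_mem[OF fD that] w DX that by blast
        then show ?thesis using f1 A by (auto simp: GSet_def)
      qed
      have v2: "k < f2 x" if "x \<in> X - D" for x
      proof -
        have "f2 x \<in># msum (X - D) w f2" by (rule msum_mem) (use X w that in auto)
        then show ?thesis using f2 B by (auto simp: GSet_def)
      qed
      have gE: "?g \<in> X \<rightarrow>\<^sub>E UNIV" using f2 DX by (auto simp: GSet_def PiE_def extensional_def)
      have go: "ordp X R ?g"
        unfolding ordp_def
      proof (intro ballI impI)
        fix x y assume xy: "x \<in> X" "y \<in> X" "(x, y) \<in> R \<and> x \<noteq> y"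
        show "?g x \<le> ?g y"
        proof (cases "y \<in> D")
          case True
          then have "x \<in> D" using D xy by (auto simp: Downs_def)
          then show ?thesis using True f1 xy by (auto simp: GSet_def ordp_def)
        next
          case False
          then show ?thesis
          proof (cases "x \<in> D")
            case True
            then show ?thesis using False v1[of x] v2[of y] xy by auto
          next
            case F2: False
            then show ?thesis using False f2 xy by (auto simp: GSet_def ordp_def)
          qed
        qed
      qed
      have "msum X w ?g = msum D w ?g + msum (X - D) w ?g" using msum_split[OF X DX] .
      also have "msum D w ?g = msum D w f1" by (rule msum_cong) auto
      also have "msum (X - D) w ?g = msum (X - D) w f2" by (rule msum_cong) auto
      finally have "msum X w ?g = A + B" using f1 f2 by (simp add: GSet_def)
      then show "\<Psi> t \<in> S" unfolding S_def GSet_def \<Psi>_def t using gE go by simp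
    qed
    show "\<Psi> (\<Phi> f) = f" if "f \<in> S" for f
    proof -
      have "f \<in> X \<rightarrow>\<^sub>E UNIV" using that by (simp add: S_def GSet_def)
      then show ?thesis unfolding \<Psi>_def \<Phi>_def by (auto simp: fun_eq_iff PiE_def extensional_def)
    qed
    show "\<Phi> (\<Psi> t) = t" if "t \<in> T" for t
    proof -
      obtain D f1 f2 where t: "t = (D, f1, f2)" and D: "D \<in> Downs X R"
        and f1: "f1 \<in> GSet D R w A" and f2: "f2 \<in> GSet (X - D) R w B" using \<open>t \<in> T\<close> by (auto simp: T_def)
      let ?g = "\<lambda>x. if x \<in> D then f1 x else f2 x"
      have DX: "D \<subseteq> X" using D by (simp add: Downs_def)
      have fD: "finite D" using DX X finite_subset by blast
      have v1: "f1 x \<le> k" if "x \<in> D" for x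
      proof -
        have "f1 x \<in># msum D w f1" using msum_mem[OF fD that] w DX that by blast
        then show ?thesis using f1 A by (auto simp: GSet_def)
      qed
      have v2: "k < f2 x" if "x \<in> X - D" for x
      proof -
        have "f2 x \<in># msum (X - D) w f2" by (rule msum_mem) (use X w that in auto)
        then show ?thesis using f2 B by (auto simp: GSet_def)
      qed
      have eD: "{x\<in>X. ?g x \<le> k} = D" using v1 v2 DX by force
      have e1: "restrict ?g D = f1" using f1 by (auto simp: fun_eq_iff GSet_def PiE_def extensional_def)
      have e2: "restrict ?g (X - D) = f2" using f2 by (auto simp: fun_eq_iff GSet_def PiE_def extensional_def)
      show ?thesis unfolding \<Psi>_def \<Phi>_def t using eD e1 e2 by simp
    qed
  qed
  have fin: "\<forall>D\<in>Downs X R. finite (GSet D R w A \<times> GSet (X - D) R w B)"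
  proof
    fix D assume "D \<in> Downs X R"
    then have "D \<subseteq> X" by (simp add: Downs_def)
    then have "finite D" "finite (X - D)" using X finite_subset by auto
    then show "finite (GSet D R w A \<times> GSet (X - D) R w B)"
      using finite_GSet w \<open>D \<subseteq> X\<close> by (metis Diff_subset finite_cartesian_product subsetD)
  qed
  have "card S = card T" using bij bij_betw_same_card by blast
  also have "card T = (\<Sum>D\<in>Downs X R. card (GSet D R w A \<times> GSet (X - D) R w B))"
    unfolding T_def using card_SigmaI[OF finite_Downs[OF X] fin] .
  finally show ?thesis unfolding GS_def S_def A_def B_def k_def mfrom_append
    by (simp add: card_cartesian_product)
qed

lemma GS_shift:
  assumes X: "finite X" and w: "\<forall>x\<in>X. w x > 0"
  shows "GS X R w (image_mset (\<lambda>v. v + t) M) = GS X R w M"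
proof -
  let ?A = "GSet X R w (image_mset (\<lambda>v. v + t) M)"
  let ?B = "GSet X R w M"
  have big: "t \<le> f x" if "f \<in> ?A" "x \<in> X" for f x
  proof -
    have "f x \<in># msum X w f" using msum_mem[OF X] w that(2) by blast
    then have "f x \<in># image_mset (\<lambda>v. v + t) M" using that(1) by (simp add: GSet_def)
    then show ?thesis by auto
  qed
  have "bij_betw (\<lambda>f. restrict (\<lambda>x. f x - t) X) ?A ?B"
  proof (rule bij_betwI[where g="\<lambda>f. restrict (\<lambda>x. f x + t) X"])
    show "(\<lambda>f. restrict (\<lambda>x. f x - t) X) \<in> ?A \<rightarrow> ?B"
    proof
      fix f assume f: "f \<in> ?A"
      have o: "ordp X R (restrict (\<lambda>x. f x - t) X)"
        using f unfolding GSet_def ordp_def by (simp add: diff_le_mono)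
      have "msum X w (restrict (\<lambda>x. f x - t) X) = msum X w ((\<lambda>v. v - t) \<circ> f)"
        by (rule msum_cong) simp
      also have "\<dots> = image_mset (\<lambda>v. v - t) (msum X w f)" by (simp add: image_msum)
      also have "\<dots> = image_mset (\<lambda>v. v - t) (image_mset (\<lambda>v. v + t) M)" using f by (simp add: GSet_def)
      also have "\<dots> = M" by (simp add: multiset.map_comp comp_def)
      finally show "restrict (\<lambda>x. f x - t) X \<in> ?B" using o by (simp add: GSet_def)
    qed
    show "(\<lambda>f. restrict (\<lambda>x. f x + t) X) \<in> ?B \<rightarrow> ?A"
    proof
      fix f assume f: "f \<in> ?B"
      have o: "ordp X R (restrict (\<lambda>x. f x + t) X)" using f unfolding GSet_def ordp_def by simp
      have "msum X w (restrict (\<lambda>x. f x + t) X) = msum X w ((\<lambda>v. v + t) \<circ> f)"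
        by (rule msum_cong) simp
      also have "\<dots> = image_mset (\<lambda>v. v + t) (msum X w f)" by (simp add: image_msum)
      also have "\<dots> = image_mset (\<lambda>v. v + t) M" using f by (simp add: GSet_def)
      finally show "restrict (\<lambda>x. f x + t) X \<in> ?A" using o by (simp add: GSet_def)
    qed
    show "restrict (\<lambda>x. restrict (\<lambda>x. f x - t) X x + t) X = f" if f: "f \<in> ?A" for f
    proof
      fix x show "restrict (\<lambda>x. restrict (\<lambda>x. f x - t) X x + t) X x = f x"
        using f big[OF f, of x] by (cases "x \<in> X") (auto simp: GSet_def PiE_def extensional_def)
    qed
    show "restrict (\<lambda>x. restrict (\<lambda>x. f x + t) X x - t) X = f" if f: "f \<in> ?B" for f
    proof
      fix x show "restrict (\<lambda>x. restrict (\<lambda>x. f x + t) X x - t) X x = f x"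
        using f by (cases "x \<in> X") (auto simp: GSet_def PiE_def extensional_def)
    qed
  qed
  then show ?thesis unfolding GS_def by (rule bij_betw_same_card)
qed

lemma GS_mfrom_shift:
  assumes "finite X" "\<forall>x\<in>X. w x > 0"
  shows "GS X R w (mfrom t xs) = GS X R w (mfrom 0 xs)"
  using GS_shift[OF assms, of R t "mfrom 0 xs"] mfrom_shift[of 0 t xs] by simp

definition Comp :: "nat \<Rightarrow> nat list set" where
  "Comp a = {g. 0 \<notin> set g \<and> sum_list g = a}"

lemma length_le_sum: "0 \<notin> set xs \<Longrightarrow> length xs \<le> sum_list xs"
  by (induction xs) auto

lemma finite_Comp: "finite (Comp a)"
proof (rule finite_subset)
  show "Comp a \<subseteq> {xs. set xs \<subseteq> {0..a} \<and> length xs \<le> a}"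
    unfolding Comp_def using length_le_sum member_le_sum_list by fastforce
  show "finite {xs. set xs \<subseteq> {0..a} \<and> length xs \<le> a}"
    by (rule finite_lists_length_le) simp
qed

lemma Comp_0: "Comp 0 = {[]}"
proof -
  have "x = []" if "0 \<notin> set x" "\<forall>n\<in>set x. n = 0" for x :: "nat list"
    using that by (cases x) auto
  then show ?thesis unfolding Comp_def by auto
qed

lemma Comp_nonempty: "a > 0 \<Longrightarrow> g \<in> Comp a \<Longrightarrow> g \<noteq> []"
  unfolding Comp_def by auto

lemma sum_Comp_snoc:
  assumes "a > 0"
  shows "(\<Sum>d\<in>Comp a. g d) = (\<Sum>c\<in>{1..a}. \<Sum>y\<in>Comp (a - c). g (y @ [c]))"
proof -
  have "(\<Sum>c\<in>{1..a}. \<Sum>y\<in>Comp (a - c). g (y @ [c])) =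
      (\<Sum>(c, y)\<in>Sigma {1..a} (\<lambda>c. Comp (a - c)). g (y @ [c]))"
    by (rule sum.Sigma) (auto simp: finite_Comp)
  also have "\<dots> = (\<Sum>p\<in>Sigma {1..a} (\<lambda>c. Comp (a - c)). g (snd p @ [fst p]))"
    by (simp add: case_prod_beta)
  also have "\<dots> = (\<Sum>d\<in>(\<lambda>p. snd p @ [fst p]) ` Sigma {1..a} (\<lambda>c. Comp (a - c)). g d)"
  proof -
    have inj: "inj_on (\<lambda>p. snd p @ [fst p]) (Sigma {1..a} (\<lambda>c. Comp (a - c)))"
      by (auto simp: inj_on_def)
    show ?thesis using sum.reindex[OF inj, of g] by (simp add: comp_def)
  qed
  also have "(\<lambda>p. snd p @ [fst p]) ` Sigma {1..a} (\<lambda>c. Comp (a - c)) = Comp a"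
  proof (intro equalityI subsetI)
    fix d assume "d \<in> (\<lambda>p. snd p @ [fst p]) ` Sigma {1..a} (\<lambda>c. Comp (a - c))"
    then show "d \<in> Comp a" by (auto simp: Comp_def)
  next
    fix d assume d: "d \<in> Comp a"
    then have ne: "d \<noteq> []" using Comp_nonempty assms by blast
    then have dd: "d = butlast d @ [last d]" by simp
    have l: "last d \<in> set d" using ne by simp
    have "sum_list d = sum_list (butlast d) + last d" by (subst dd) simp
    then have "(last d, butlast d) \<in> Sigma {1..a} (\<lambda>c. Comp (a - c))"
      using d l by (auto simp: Comp_def in_set_butlastD Suc_le_eq intro!: Nat.gr0I)
    then show "d \<in> (\<lambda>p. snd p @ [fst p]) ` Sigma {1..a} (\<lambda>c. Comp (a - c))"
      using dd by (metis (no_types, lifting) image_eqI prod.sel)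
  qed
  finally show ?thesis by simp
qed

definition wgt :: "nat list \<Rightarrow> real" where
  "wgt g = (-1) ^ (length g - 1) * real (last g)"

fun phi :: "nat list \<Rightarrow> (nat list \<Rightarrow> real) \<Rightarrow> real" where
  "phi [] G = G []"
| "phi (a # as) G = (\<Sum>g\<in>Comp a. wgt g * phi as (\<lambda>b. G (g @ b)))"

lemma phi_sum: "phi as (\<lambda>b. \<Sum>i\<in>I. H i b) = (\<Sum>i\<in>I. phi as (H i))"
proof (induction as arbitrary: H)
  case Nil
  then show ?case by simp
next
  case (Cons a as)
  have "phi (a # as) (\<lambda>b. \<Sum>i\<in>I. H i b) = (\<Sum>g\<in>Comp a. wgt g * (\<Sum>i\<in>I. phi as (\<lambda>b. H i (g @ b))))"
    using Cons.IH[of "\<lambda>i b. H i (_ @ b)"] by simp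
  also have "\<dots> = (\<Sum>i\<in>I. \<Sum>g\<in>Comp a. wgt g * phi as (\<lambda>b. H i (g @ b)))"
    by (simp add: sum_distrib_left sum.swap[of _ I])
  finally show ?case by simp
qed

lemma phi_mult: "phi as (\<lambda>b. c * H b) = c * phi as H"
proof (induction as arbitrary: H)
  case Nil
  then show ?case by simp
next
  case (Cons a as)
  then show ?case by (simp add: sum_distrib_left algebra_simps)
qed

lemma swap3: "(\<Sum>c\<in>C. \<Sum>g\<in>G c. \<Sum>E\<in>DD. (f c g E :: real)) = (\<Sum>E\<in>DD. \<Sum>c\<in>C. \<Sum>g\<in>G c. f c g E)"
proof -
  have "\<And>c. (\<Sum>g\<in>G c. \<Sum>E\<in>DD. f c g E) = (\<Sum>E\<in>DD. \<Sum>g\<in>G c. f c g E)" by (rule sum.swap)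
  then have "(\<Sum>c\<in>C. \<Sum>g\<in>G c. \<Sum>E\<in>DD. f c g E) = (\<Sum>c\<in>C. \<Sum>E\<in>DD. \<Sum>g\<in>G c. f c g E)" by simp
  also have "\<dots> = (\<Sum>E\<in>DD. \<Sum>c\<in>C. \<Sum>g\<in>G c. f c g E)" by (rule sum.swap)
  finally show ?thesis .
qed
lemma replicate_mset_add: "replicate_mset (a + b) v = replicate_mset a v + replicate_mset b v"
  by (induction a) auto

definition Gv :: "'a set \<Rightarrow> 'a rel \<Rightarrow> ('a \<Rightarrow> nat) \<Rightarrow> nat list \<Rightarrow> real" where
  "Gv X R w b = real (GS X R w (mfrom 0 b))"

lemma msum_const: "finite X \<Longrightarrow> msum X w (\<lambda>_. v) = replicate_mset (sum w X) v"
  unfolding msum_def by (induction X rule: finite_induct) (auto simp: replicate_mset_add)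

lemma GS_size:
  assumes "finite X" "size m \<noteq> sum w X"
  shows "GS X R w m = 0"
proof -
  have "GSet X R w m = {}" using assms size_msum[of X w] by (auto simp: GSet_def)
  then show ?thesis by (simp add: GS_def)
qed

lemma GS_empty: "GS {} R w {#} = 1"
proof -
  have "GSet {} R w {#} = {\<lambda>_. undefined}"
    unfolding GSet_def ordp_def msum_def PiE_empty_domain by auto
  then show ?thesis by (simp add: GS_def)
qed

lemma GS_single:
  assumes X: "finite U" and w: "\<forall>x\<in>U. w x > 0"
  shows "GS U R w (replicate_mset c v) = (if sum w U = c then 1 else 0)"
proof -
  have "GSet U R w (replicate_mset c v) = (if sum w U = c then {restrict (\<lambda>_. v) U} else {})"
  proof (intro equalityI subsetI)
    fix f assume f: "f \<in> GSet U R w (replicate_mset c v)"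
    have fv: "f x = v" if "x \<in> U" for x
    proof -
      have "f x \<in># msum U w f" using msum_mem[OF X that] w that by blast
      then show ?thesis using f by (simp add: GSet_def split: if_splits)
    qed
    have fE: "f \<in> U \<rightarrow>\<^sub>E UNIV" using f by (simp add: GSet_def)
    have fe: "f = restrict (\<lambda>_. v) U"
    proof
      fix x show "f x = restrict (\<lambda>_. v) U x"
      proof (cases "x \<in> U")
        case True then show ?thesis using fv by simp
      next
        case False then show ?thesis using PiE_arb[OF fE False] by simp
      qed
    qed
    have "msum U w f = msum U w (\<lambda>_. v)" by (rule msum_cong) (use fv in auto)
    then have "replicate_mset (sum w U) v = replicate_mset c v" using f msum_const[OF X] by (simp add: GSet_def)
    then have "sum w U = c" by (metis size_replicate_mset)
    then show "f \<in> (if sum w U = c then {restrict (\<lambda>_. v) U} else {})" using fe by simp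
  next
    fix f assume f: "f \<in> (if sum w U = c then {restrict (\<lambda>_. v) U} else {})"
    then have c: "sum w U = c" and fe: "f = restrict (\<lambda>_. v) U" by (auto split: if_splits)
    have "msum U w f = msum U w (\<lambda>_. v)" by (rule msum_cong) (simp add: fe)
    moreover have "f \<in> U \<rightarrow>\<^sub>E UNIV" using fe by simp
    moreover have "ordp U R f" using fe by (simp add: ordp_def)
    ultimately show "f \<in> GSet U R w (replicate_mset c v)"
      using c msum_const[OF X, of w v] unfolding GSet_def by simp
  qed
  then show ?thesis by (simp add: GS_def)
qed

lemma Gv_split:
  assumes X: "finite X" and w: "\<forall>x\<in>X. w x > 0"
  shows "Gv X R w (g @ b) = (\<Sum>D\<in>Downs X R. Gv D R w g * Gv (X - D) R w b)"
proof -
  have "GS X R w (mfrom 0 (g @ b)) =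
    (\<Sum>D\<in>Downs X R. GS D R w (mfrom 0 g) * GS (X - D) R w (mfrom (0 + length g) b))"
    by (rule GS_split[OF X w])
  also have "\<dots> = (\<Sum>D\<in>Downs X R. GS D R w (mfrom 0 g) * GS (X - D) R w (mfrom 0 b))"
  proof (rule sum.cong[OF refl])
    fix D assume "D \<in> Downs X R"
    then have "D \<subseteq> X" by (simp add: Downs_def)
    then have "finite (X - D)" "\<forall>x\<in>X - D. w x > 0" using X w by auto
    then show "GS D R w (mfrom 0 g) * GS (X - D) R w (mfrom (0 + length g) b) =
      GS D R w (mfrom 0 g) * GS (X - D) R w (mfrom 0 b)"
      using GS_mfrom_shift[of "X - D" w R "length g" b] by simp
  qed
  finally show ?thesis unfolding Gv_def by (simp add: of_nat_sum)
qed

lemma Gv_snoc: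
  assumes X: "finite Q" and w: "\<forall>x\<in>Q. w x > 0"
  shows "Gv Q R w (g @ [c]) = (\<Sum>E\<in>Downs Q R. Gv E R w g * (if sum w (Q - E) = c then 1 else 0))"
proof -
  have "Gv (Q - E) R w [c] = (if sum w (Q - E) = c then 1 else 0)" for E
    unfolding Gv_def using GS_single[of "Q - E" w R c "Suc 0"] X w by simp
  then show ?thesis using Gv_split[OF X w, of R g "[c]"] by simp
qed

lemma star:
  assumes X: "finite Q" and w: "\<forall>x\<in>Q. w x > 0" and a: "a > 0"
  shows "(\<Sum>d\<in>Comp a. h (butlast d) * u (last d) * Gv Q R w d) =
    (\<Sum>E\<in>Downs Q R. if sum w (Q - E) \<in> {1..a}
        then u (sum w (Q - E)) * (\<Sum>g\<in>Comp (a - sum w (Q - E)). h g * Gv E R w g) else 0)"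
proof -
  have "(\<Sum>d\<in>Comp a. h (butlast d) * u (last d) * Gv Q R w d) =
      (\<Sum>c\<in>{1..a}. \<Sum>g\<in>Comp (a - c). h g * u c * Gv Q R w (g @ [c]))"
    using sum_Comp_snoc[OF a, of "\<lambda>d. h (butlast d) * u (last d) * Gv Q R w d"] by simp
  also have "\<dots> = (\<Sum>c\<in>{1..a}. \<Sum>g\<in>Comp (a - c). \<Sum>E\<in>Downs Q R.
      (if sum w (Q - E) = c then u c * (h g * Gv E R w g) else 0))"
  proof -
    have "h g * u c * Gv Q R w (g @ [c]) = (\<Sum>E\<in>Downs Q R.
      (if sum w (Q - E) = c then u c * (h g * Gv E R w g) else 0))" for g c
      unfolding Gv_snoc[OF X w] sum_distrib_left by (rule sum.cong) auto
    then show ?thesis by simp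
  qed
  also have "\<dots> = (\<Sum>E\<in>Downs Q R. \<Sum>c\<in>{1..a}. \<Sum>g\<in>Comp (a - c).
      (if sum w (Q - E) = c then u c * (h g * Gv E R w g) else 0))"
    by (rule swap3)
  also have "\<dots> = (\<Sum>E\<in>Downs Q R. \<Sum>c\<in>{1..a}.
      (if sum w (Q - E) = c then u c * (\<Sum>g\<in>Comp (a - c). h g * Gv E R w g) else 0))"
  proof -
    have "(\<Sum>g\<in>Comp (a - c). (if P then u c * (h g * Gv E R w g) else 0)) =
      (if P then u c * (\<Sum>g\<in>Comp (a - c). h g * Gv E R w g) else 0)" for P c E
      by (cases P) (simp_all add: sum_distrib_left)
    then show ?thesis by simp
  qed
  also have "\<dots> = (\<Sum>E\<in>Downs Q R. if sum w (Q - E) \<in> {1..a}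
        then u (sum w (Q - E)) * (\<Sum>g\<in>Comp (a - sum w (Q - E)). h g * Gv E R w g) else 0)"
  proof -
    have "(\<Sum>c\<in>{1..a}. (if s = c then u c * (\<Sum>g\<in>Comp (a - c). h g * Gv E R w g) else 0)) =
      (if s \<in> {1..a} then u s * (\<Sum>g\<in>Comp (a - s). h g * Gv E R w g) else 0)" for s E
      by (rule sum.delta') simp
    then show ?thesis by simp
  qed
  finally show ?thesis .
qed

definition Lam :: "'a set \<Rightarrow> 'a rel \<Rightarrow> ('a \<Rightarrow> nat) \<Rightarrow> real" where
  "Lam E R w = (\<Sum>g\<in>Comp (sum w E). (-1) ^ length g * Gv E R w g)"

lemma Gv_empty: "Gv {} R w [] = 1"
  unfolding Gv_def using GS_empty by simp

lemma Downs_empty: "Downs {} R = {{}}"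
  by (auto simp: Downs_def)

lemma self_Downs: "Q \<in> Downs Q R"
  by (auto simp: Downs_def)

lemma Downs_sub: "E \<in> Downs Q R \<Longrightarrow> E \<subseteq> Q"
  by (auto simp: Downs_def)

lemma T_lemma:
  assumes X: "finite Q" and w: "\<forall>x\<in>Q. w x > 0"
  shows "(\<Sum>E\<in>Downs Q R. Lam E R w) = (if Q = {} then 1 else 0)"
proof (cases "Q = {}")
  case True
  then show ?thesis by (simp add: Downs_empty Lam_def Comp_0 Gv_empty)
next
  case False
  define a where "a = sum w Q"
  have a: "a > 0" unfolding a_def using sum_pos[OF X False] w by blast
  have st: "(\<Sum>d\<in>Comp a. (\<lambda>g. (-1::real) ^ length g) (butlast d) * (\<lambda>_. 1) (last d) * Gv Q R w d) =
    (\<Sum>E\<in>Downs Q R. if sum w (Q - E) \<in> {1..a}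
        then (\<lambda>_. 1) (sum w (Q - E)) * (\<Sum>g\<in>Comp (a - sum w (Q - E)). (\<lambda>g. (-1::real) ^ length g) g * Gv E R w g) else 0)"
    by (rule star[OF X w a])
  have l: "(\<Sum>d\<in>Comp a. (\<lambda>g. (-1::real) ^ length g) (butlast d) * (\<lambda>_. 1) (last d) * Gv Q R w d) = - Lam Q R w"
  proof -
    have "(-1::real) ^ length (butlast d) * 1 * Gv Q R w d = - ((-1) ^ length d * Gv Q R w d)" if "d \<in> Comp a" for d
    proof -
      have "d \<noteq> []" using Comp_nonempty[OF a that] .
      then obtain n where n: "length d = Suc n" by (cases d) auto
      then show ?thesis by simp
    qed
    then have "(\<Sum>d\<in>Comp a. (-1::real) ^ length (butlast d) * 1 * Gv Q R w d) = (\<Sum>d\<in>Comp a. - ((-1) ^ length d * Gv Q R w d))"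
      by (rule sum.cong[OF refl])
    then show ?thesis unfolding Lam_def a_def by (simp add: sum_negf)
  qed
  have r: "(\<Sum>E\<in>Downs Q R. if sum w (Q - E) \<in> {1..a}
        then (\<lambda>_. 1) (sum w (Q - E)) * (\<Sum>g\<in>Comp (a - sum w (Q - E)). (\<lambda>g. (-1::real) ^ length g) g * Gv E R w g) else 0)
     = (\<Sum>E\<in>Downs Q R. if E = Q then 0 else Lam E R w)"
  proof (rule sum.cong[OF refl])
    fix E assume E: "E \<in> Downs Q R"
    then have EQ: "E \<subseteq> Q" by (rule Downs_sub)
    have fE: "finite E" using EQ X finite_subset by blast
    have s: "sum w (Q - E) = a - sum w E" unfolding a_def using sum_diff_nat[OF fE EQ] .
    have le: "sum w E \<le> a" unfolding a_def by (rule sum_mono2[OF X EQ]) simp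
    have pos: "sum w (Q - E) > 0 \<longleftrightarrow> E \<noteq> Q"
    proof
      assume "sum w (Q - E) > 0" then show "E \<noteq> Q" by auto
    next
      assume "E \<noteq> Q"
      then have "Q - E \<noteq> {}" using EQ by auto
      then show "sum w (Q - E) > 0" using sum_pos[of "Q - E" w] X w by auto
    qed
    show "(if sum w (Q - E) \<in> {1..a}
        then (\<lambda>_. 1) (sum w (Q - E)) * (\<Sum>g\<in>Comp (a - sum w (Q - E)). (\<lambda>g. (-1::real) ^ length g) g * Gv E R w g) else 0)
      = (if E = Q then 0 else Lam E R w)"
    proof (cases "E = Q")
      case True
      then show ?thesis by simp
    next
      case False
      then have "sum w (Q - E) \<in> {1..a}" using pos s le by auto
      moreover have "a - sum w (Q - E) = sum w E" using s le by simp
      ultimately show ?thesis using False by (simp add: Lam_def)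
    qed
  qed
  have "(\<Sum>E\<in>Downs Q R. if E = Q then 0 else Lam E R w) = (\<Sum>E\<in>Downs Q R. Lam E R w) - Lam Q R w"
  proof -
    have "(\<Sum>E\<in>Downs Q R. Lam E R w) = Lam Q R w + (\<Sum>E\<in>Downs Q R - {Q}. Lam E R w)"
      using sum.remove[OF finite_Downs[OF X] self_Downs] by blast
    moreover have "(\<Sum>E\<in>Downs Q R. if E = Q then 0 else Lam E R w) = (\<Sum>E\<in>Downs Q R - {Q}. Lam E R w)"
      using sum.remove[OF finite_Downs[OF X] self_Downs, of "\<lambda>E. if E = Q then 0 else Lam E R w" R] 
      by (simp add: sum.cong[of "Downs Q R - {Q}" "Downs Q R - {Q}" "\<lambda>E. if E = Q then 0 else Lam E R w" "\<lambda>E. Lam E R w"])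
    ultimately show ?thesis by simp
  qed
  then show ?thesis using st l r False by simp
qed

definition Up :: "'a rel \<Rightarrow> 'a \<Rightarrow> 'a set" where
  "Up R z = {y. y = z \<or> (z, y) \<in> R}"

lemma Downs_avoid:
  assumes z: "z \<in> D" and tr: "trans R"
  shows "{E \<in> Downs D R. z \<notin> E} = Downs (D - Up R z) R"
proof (intro equalityI subsetI)
  fix E assume E: "E \<in> {E \<in> Downs D R. z \<notin> E}"
  have "E \<subseteq> D - Up R z"
  proof
    fix y assume y: "y \<in> E"
    have "y \<in> D" using E y by (auto simp: Downs_def)
    moreover have "y \<notin> Up R z"
    proof
      assume "y \<in> Up R z"
      then have "y = z \<or> (z, y) \<in> R" by (simp add: Up_def)
      then have "z \<in> E" using E y z by (auto simp: Downs_def)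
      then show False using E by simp
    qed
    ultimately show "y \<in> D - Up R z" by simp
  qed
  then show "E \<in> Downs (D - Up R z) R" using E by (auto simp: Downs_def)
next
  fix E assume E: "E \<in> Downs (D - Up R z) R"
  have sub: "E \<subseteq> D - Up R z" using E by (simp add: Downs_def)
  have "z \<notin> E" using sub by (auto simp: Up_def)
  moreover have "E \<in> Downs D R"
    unfolding Downs_def
  proof (intro CollectI conjI ballI impI)
    show "E \<subseteq> D" using sub by auto
    fix x y assume x: "x \<in> D" and y: "y \<in> E" and xy: "(x, y) \<in> R \<and> x \<noteq> y"
    have yU: "y \<notin> Up R z" using sub y by auto
    have "x \<notin> Up R z"
    proof
      assume "x \<in> Up R z"
      then have "x = z \<or> (z, x) \<in> R" by (simp add: Up_def)
      then have "(z, y) \<in> R" using xy tr by (auto dest: transD)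
      then show False using yU by (simp add: Up_def)
    qed
    then show "x \<in> E" using E x y xy by (auto simp: Downs_def)
  qed
  ultimately show "E \<in> {E \<in> Downs D R. z \<notin> E}" by simp
qed

definition Lz :: "'a set \<Rightarrow> 'a rel \<Rightarrow> ('a \<Rightarrow> nat) \<Rightarrow> real" where
  "Lz D R w = (\<Sum>z\<in>{z\<in>D. \<forall>y\<in>D. y \<noteq> z \<longrightarrow> (z, y) \<in> R}. real (w z))"

lemma S_lemma:
  assumes X: "finite D" and w: "\<forall>x\<in>D. w x > 0" and tr: "trans R" and a: "a > 0" and sa: "sum w D = a"
  shows "(\<Sum>d\<in>Comp a. wgt d * Gv D R w d) = Lz D R w"
proof -
  have "(\<Sum>d\<in>Comp a. wgt d * Gv D R w d) =
     (\<Sum>d\<in>Comp a. (\<lambda>g. (-1::real) ^ length g) (butlast d) * (\<lambda>c. real c) (last d) * Gv D R w d)"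
    by (simp add: wgt_def)
  also have "\<dots> = (\<Sum>E\<in>Downs D R. if sum w (D - E) \<in> {1..a}
        then (\<lambda>c. real c) (sum w (D - E)) * (\<Sum>g\<in>Comp (a - sum w (D - E)). (\<lambda>g. (-1::real) ^ length g) g * Gv E R w g) else 0)"
    by (rule star[OF X w a])
  also have "\<dots> = (\<Sum>E\<in>Downs D R. real (sum w (D - E)) * Lam E R w)"
  proof (rule sum.cong[OF refl])
    fix E assume E: "E \<in> Downs D R"
    then have EQ: "E \<subseteq> D" by (rule Downs_sub)
    have fE: "finite E" using EQ X finite_subset by blast
    have s: "sum w (D - E) = a - sum w E" unfolding sa[symmetric] using sum_diff_nat[OF fE EQ] .
    have le: "sum w E \<le> a" unfolding sa[symmetric] by (rule sum_mono2[OF X EQ]) simp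
    show "(if sum w (D - E) \<in> {1..a}
        then (\<lambda>c. real c) (sum w (D - E)) * (\<Sum>g\<in>Comp (a - sum w (D - E)). (\<lambda>g. (-1::real) ^ length g) g * Gv E R w g) else 0)
      = real (sum w (D - E)) * Lam E R w"
    proof (cases "sum w (D - E) = 0")
      case True
      then show ?thesis by simp
    next
      case False
      then have "sum w (D - E) \<in> {1..a}" using s le by auto
      moreover have "a - sum w (D - E) = sum w E" using s le by simp
      ultimately show ?thesis by (simp add: Lam_def)
    qed
  qed
  also have "\<dots> = (\<Sum>E\<in>Downs D R. \<Sum>z\<in>D. if z \<notin> E then real (w z) * Lam E R w else 0)"
  proof (rule sum.cong[OF refl])
    fix E assume E: "E \<in> Downs D R"
    have "real (sum w (D - E)) = (\<Sum>z\<in>D - E. real (w z))" by (simp add: of_nat_sum)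
    also have "\<dots> = (\<Sum>z\<in>D. if z \<notin> E then real (w z) else 0)"
    proof -
      have "D - E = {z\<in>D. z \<notin> E}" by auto
      then show ?thesis using sum.inter_filter[OF X, of "\<lambda>z. real (w z)" "\<lambda>z. z \<notin> E"] by simp
    qed
    finally show "real (sum w (D - E)) * Lam E R w = (\<Sum>z\<in>D. if z \<notin> E then real (w z) * Lam E R w else 0)"
      by (simp add: sum_distrib_right) (rule sum.cong, auto)
  qed
  also have "\<dots> = (\<Sum>z\<in>D. \<Sum>E\<in>Downs D R. if z \<notin> E then real (w z) * Lam E R w else 0)"
    by (rule sum.swap)
  also have "\<dots> = (\<Sum>z\<in>D. real (w z) * (\<Sum>E\<in>{E \<in> Downs D R. z \<notin> E}. Lam E R w))"
  proof (rule sum.cong[OF refl])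
    fix z assume z: "z \<in> D"
    show "(\<Sum>E\<in>Downs D R. if z \<notin> E then real (w z) * Lam E R w else 0) =
        real (w z) * (\<Sum>E\<in>{E \<in> Downs D R. z \<notin> E}. Lam E R w)"
      using sum.inter_filter[OF finite_Downs[OF X], of "\<lambda>E. real (w z) * Lam E R w" R "\<lambda>E. z \<notin> E"]
      by (simp add: sum_distrib_left)
  qed
  also have "\<dots> = (\<Sum>z\<in>D. if (\<forall>y\<in>D. y \<noteq> z \<longrightarrow> (z, y) \<in> R) then real (w z) else 0)"
  proof (rule sum.cong[OF refl])
    fix z assume z: "z \<in> D"
    have "(\<Sum>E\<in>{E \<in> Downs D R. z \<notin> E}. Lam E R w) = (\<Sum>E\<in>Downs (D - Up R z) R. Lam E R w)"
      using Downs_avoid[OF z tr] by simp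
    also have "\<dots> = (if D - Up R z = {} then 1 else 0)"
      by (rule T_lemma) (use X w in auto)
    also have "(D - Up R z = {}) = (\<forall>y\<in>D. y \<noteq> z \<longrightarrow> (z, y) \<in> R)"
      by (auto simp: Up_def)
    finally show "real (w z) * (\<Sum>E\<in>{E \<in> Downs D R. z \<notin> E}. Lam E R w) =
      (if (\<forall>y\<in>D. y \<noteq> z \<longrightarrow> (z, y) \<in> R) then real (w z) else 0)" by auto
  qed
  also have "\<dots> = Lz D R w"
    unfolding Lz_def using sum.inter_filter[OF X, of "\<lambda>z. real (w z)"] by simp
  finally show ?thesis .
qed

lemma phi_Gv:
  assumes X: "finite X" and w: "\<forall>x\<in>X. w x > 0"
  shows "phi (a # as) (Gv X R w) =
    (\<Sum>D\<in>Downs X R. (\<Sum>g\<in>Comp a. wgt g * Gv D R w g) * phi as (Gv (X - D) R w))"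
proof -
  have "phi (a # as) (Gv X R w) = (\<Sum>g\<in>Comp a. wgt g * phi as (\<lambda>b. Gv X R w (g @ b)))"
    by simp
  also have "\<dots> = (\<Sum>g\<in>Comp a. wgt g * phi as (\<lambda>b. \<Sum>D\<in>Downs X R. Gv D R w g * Gv (X - D) R w b))"
    by (simp add: Gv_split[OF X w])
  also have "\<dots> = (\<Sum>g\<in>Comp a. wgt g * (\<Sum>D\<in>Downs X R. Gv D R w g * phi as (Gv (X - D) R w)))"
    by (simp add: phi_sum phi_mult)
  also have "\<dots> = (\<Sum>g\<in>Comp a. \<Sum>D\<in>Downs X R. wgt g * Gv D R w g * phi as (Gv (X - D) R w))"
    by (simp add: sum_distrib_left mult.assoc)
  also have "\<dots> = (\<Sum>D\<in>Downs X R. \<Sum>g\<in>Comp a. wgt g * Gv D R w g * phi as (Gv (X - D) R w))"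
    by (rule sum.swap)
  also have "\<dots> = (\<Sum>D\<in>Downs X R. (\<Sum>g\<in>Comp a. wgt g * Gv D R w g) * phi as (Gv (X - D) R w))"
    by (simp add: sum_distrib_right)
  finally show ?thesis .
qed

fun Psi :: "'a set \<Rightarrow> 'a rel \<Rightarrow> ('a \<Rightarrow> nat) \<Rightarrow> nat list \<Rightarrow> real" where
  "Psi X R w [] = (if X = {} then 1 else 0)"
| "Psi X R w (a # as) = (\<Sum>D\<in>Downs X R. (if sum w D = a then Lz D R w else 0) * Psi (X - D) R w as)"

lemma phi_Psi:
  assumes "finite X" "\<forall>x\<in>X. w x > 0" "trans R" "\<forall>a\<in>set as. a > 0"
  shows "phi as (Gv X R w) = Psi X R w as"
  using assms
proof (induction as arbitrary: X)
  case Nil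
  show ?case
  proof (cases "X = {}")
    case True
    then show ?thesis by (simp add: Gv_empty)
  next
    case False
    then have "sum w X > 0" using sum_pos[OF Nil(1) False] Nil(2) by blast
    then have "GS X R w (mfrom 0 []) = 0" using GS_size[OF Nil(1)] by simp
    then show ?thesis using False by (simp add: Gv_def)
  qed
next
  case (Cons a as)
  have a: "a > 0" using Cons.prems by simp
  show ?case unfolding phi_Gv[OF Cons.prems(1,2)] Psi.simps
  proof (rule sum.cong[OF refl])
    fix D assume D: "D \<in> Downs X R"
    then have DX: "D \<subseteq> X" by (rule Downs_sub)
    have fD: "finite D" using DX Cons.prems(1) finite_subset by blast
    have wD: "\<forall>x\<in>D. w x > 0" using DX Cons.prems(2) by auto
    have IH: "phi as (Gv (X - D) R w) = Psi (X - D) R w as"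
      by (rule Cons.IH) (use Cons.prems in auto)
    have "(\<Sum>g\<in>Comp a. wgt g * Gv D R w g) = (if sum w D = a then Lz D R w else 0)"
    proof (cases "sum w D = a")
      case True
      then show ?thesis using S_lemma[OF fD wD Cons.prems(3) a True] by simp
    next
      case False
      have "Gv D R w g = 0" if "g \<in> Comp a" for g
        unfolding Gv_def using GS_size[OF fD] False that by (simp add: size_mfrom Comp_def)
      then show ?thesis using False by simp
    qed
    then show "(\<Sum>g\<in>Comp a. wgt g * Gv D R w g) * phi as (Gv (X - D) R w) =
        (if sum w D = a then Lz D R w else 0) * Psi (X - D) R w as" using IH by simp
  qed
qed

lemma Lz_nonneg: "Lz D R w \<ge> 0"
  unfolding Lz_def by (rule sum_nonneg) simp

lemma Psi_nonneg: "Psi X R w as \<ge> 0"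
proof (induction as arbitrary: X)
  case Nil then show ?case by simp
next
  case (Cons a as)
  then show ?case by (simp add: sum_nonneg Lz_nonneg)
qed

lemma Downs_antichain: "Downs X {} = Pow X"
  by (auto simp: Downs_def)

lemma Lz_antichain: "Lz D {} w = (if \<exists>z. D = {z} then real (w (the_elem D)) else 0)"
proof (cases "\<exists>z. D = {z}")
  case True
  then obtain z where "D = {z}" by blast
  then have e: "{z\<in>D. \<forall>y\<in>D. y \<noteq> z \<longrightarrow> (z, y) \<in> {}} = {z}" by auto
  show ?thesis unfolding Lz_def e using \<open>D = {z}\<close> by simp
next
  case False
  then have e: "{z\<in>D. \<forall>y\<in>D. y \<noteq> z \<longrightarrow> (z, y) \<in> {}} = {}" by auto
  show ?thesis unfolding Lz_def e using False by simp
qed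

lemma Psi_antichain_pos:
  assumes "finite X" "\<forall>x\<in>X. w x > 0"
  shows "Psi X {} w as > 0 \<longleftrightarrow> image_mset w (mset_set X) = mset as"
  using assms
proof (induction as arbitrary: X)
  case Nil
  then show ?case by (auto simp: mset_set_empty_iff)
next
  case (Cons a as)
  have fin: "finite (Pow X)" using Cons.prems by simp
  have eq: "Psi X {} w (a # as) = (\<Sum>D\<in>Pow X. (if sum w D = a then Lz D {} w else 0) * Psi (X - D) {} w as)"
    by (simp add: Downs_antichain)
  have nn: "\<forall>D\<in>Pow X. (if sum w D = a then Lz D {} w else 0) * Psi (X - D) {} w as \<ge> 0"
    using mult_nonneg_nonneg[OF Lz_nonneg Psi_nonneg] by (simp add: mult_nonneg_nonneg Lz_nonneg Psi_nonneg)
  have "Psi X {} w (a # as) > 0 \<longleftrightarrow> (\<exists>D\<in>Pow X. (if sum w D = a then Lz D {} w else 0) * Psi (X - D) {} w as > 0)"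
  proof
    assume "Psi X {} w (a # as) > 0"
    then have "(\<Sum>D\<in>Pow X. (if sum w D = a then Lz D {} w else 0) * Psi (X - D) {} w as) \<noteq> 0" using eq by simp
    then obtain D where "D \<in> Pow X" "(if sum w D = a then Lz D {} w else 0) * Psi (X - D) {} w as \<noteq> 0"
      using sum.neutral by (metis (no_types, lifting))
    then show "\<exists>D\<in>Pow X. (if sum w D = a then Lz D {} w else 0) * Psi (X - D) {} w as > 0"
      using nn by (metis order_le_less)
  next
    assume "\<exists>D\<in>Pow X. (if sum w D = a then Lz D {} w else 0) * Psi (X - D) {} w as > 0"
    then obtain D where "D \<in> Pow X" "(if sum w D = a then Lz D {} w else 0) * Psi (X - D) {} w as > 0" by blast
    then show "Psi X {} w (a # as) > 0" unfolding eq
      using sum_pos2[OF fin, of D] nn by (metis (no_types, lifting))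
  qed
  also have "\<dots> \<longleftrightarrow> (\<exists>z\<in>X. w z = a \<and> image_mset w (mset_set (X - {z})) = mset as)"
  proof
    assume "\<exists>D\<in>Pow X. (if sum w D = a then Lz D {} w else 0) * Psi (X - D) {} w as > 0"
    then obtain D where D: "D \<subseteq> X" and p: "(if sum w D = a then Lz D {} w else 0) * Psi (X - D) {} w as > 0" by auto
    have l: "sum w D = a" and lz: "Lz D {} w > 0" and ps: "Psi (X - D) {} w as > 0"
      using p Lz_nonneg[of D "{}" w] Psi_nonneg[of "X - D" "{}" w as]
      by (auto split: if_splits simp: zero_less_mult_iff)
    then obtain z where z: "D = {z}" using Lz_antichain[of D w] by (auto split: if_splits)
    have "image_mset w (mset_set (X - {z})) = mset as"
      using Cons.IH[of "X - {z}"] Cons.prems ps z by auto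
    then show "\<exists>z\<in>X. w z = a \<and> image_mset w (mset_set (X - {z})) = mset as" using z D l by auto
  next
    assume "\<exists>z\<in>X. w z = a \<and> image_mset w (mset_set (X - {z})) = mset as"
    then obtain z where z: "z \<in> X" "w z = a" "image_mset w (mset_set (X - {z})) = mset as" by blast
    have ps: "Psi (X - {z}) {} w as > 0" using Cons.IH[of "X - {z}"] Cons.prems z by auto
    have "w z > 0" using Cons.prems z by auto
    then have "Lz {z} {} w > 0" using Lz_antichain[of "{z}" w] by simp
    show "\<exists>D\<in>Pow X. (if sum w D = a then Lz D {} w else 0) * Psi (X - D) {} w as > 0"
    proof (rule bexI[of _ "{z}"])
      show "{z} \<in> Pow X" using z by simp
      have "sum w {z} = a" using z by simp
      then have e: "(if sum w {z} = a then Lz {z} {} w else 0) = Lz {z} {} w" by (rule if_P)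
      show "(if sum w {z} = a then Lz {z} {} w else 0) * Psi (X - {z}) {} w as > 0"
        unfolding e by (rule mult_pos_pos) fact+
    qed
  qed
  also have "\<dots> \<longleftrightarrow> image_mset w (mset_set X) = mset (a # as)"
  proof
    assume "\<exists>z\<in>X. w z = a \<and> image_mset w (mset_set (X - {z})) = mset as"
    then obtain z where z: "z \<in> X" "w z = a" "image_mset w (mset_set (X - {z})) = mset as" by blast
    have "mset_set X = add_mset z (mset_set (X - {z}))" by (rule mset_set.remove[OF Cons.prems(1) z(1)])
    then show "image_mset w (mset_set X) = mset (a # as)" using z by simp
  next
    assume h: "image_mset w (mset_set X) = mset (a # as)"
    then have "a \<in># image_mset w (mset_set X)" by simp
    then obtain z where z: "z \<in> X" "w z = a" using Cons.prems(1) by auto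
    have "mset_set X = add_mset z (mset_set (X - {z}))" by (rule mset_set.remove[OF Cons.prems(1) z(1)])
    then have "image_mset w (mset_set (X - {z})) = mset as" using h z by simp
    then show "\<exists>z\<in>X. w z = a \<and> image_mset w (mset_set (X - {z})) = mset as" using z by blast
  qed
  finally show ?case .
qed

lemma finite_msubsets: "finite {N. N \<subseteq># (M :: 'b multiset)}"
proof (induction M)
  case empty
  then show ?case by simp
next
  case (add x M)
  have "{N. N \<subseteq># add_mset x M} \<subseteq> {N. N \<subseteq># M} \<union> add_mset x ` {N. N \<subseteq># M}"
  proof
    fix N assume N: "N \<in> {N. N \<subseteq># add_mset x M}"
    show "N \<in> {N. N \<subseteq># M} \<union> add_mset x ` {N. N \<subseteq># M}"
    proof (cases "x \<in># N")
      case True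
      then have e: "N = add_mset x (N - {#x#})" by simp
      have c: "count N y \<le> count (add_mset x M) y" for y using N by (simp add: subseteq_mset_def)
      have "count (N - {#x#}) y \<le> count M y" for y
        using c[of y] by (cases "y = x") auto
      then have "N - {#x#} \<subseteq># M" by (simp add: subseteq_mset_def)
      then show ?thesis using e by blast
    next
      case False
      have c: "count N y \<le> count (add_mset x M) y" for y using N by (simp add: subseteq_mset_def)
      have "count N y \<le> count M y" for y
        using c[of y] False by (cases "y = x") (auto simp: count_eq_zero_iff[symmetric])
      then have "N \<subseteq># M" by (simp add: subseteq_mset_def)
      then show ?thesis by blast
    qed
  qed
  moreover have "finite ({N. N \<subseteq># M} \<union> add_mset x ` {N. N \<subseteq># M})" using add by simp
  ultimately show ?case by (rule finite_subset)
qed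

lemma msum_one: "msum A (\<lambda>_. 1) f = image_mset f (mset_set A)"
  unfolding msum_def by (induction A rule: infinite_finite_induct) auto

lemma msum_one': "msum A (\<lambda>_. Suc 0) f = image_mset f (mset_set A)"
  using msum_one[of A f] by simp

lemma K_Gv:
  assumes A: "finite A"
  shows "K_poset A R (mfrom 0 b) = Gv A R (\<lambda>_. 1) b"
proof -
  have "{f \<in> A \<rightarrow>\<^sub>E {0<..}. (\<forall>x\<in>A. \<forall>y\<in>A. (x, y) \<in> R \<and> x \<noteq> y \<longrightarrow> f x \<le> f y)
       \<and> image_mset f (mset_set A) = mfrom 0 b} = GSet A R (\<lambda>_. 1) (mfrom 0 b)"
  proof (intro equalityI subsetI)
    fix f assume "f \<in> {f \<in> A \<rightarrow>\<^sub>E {0<..}. (\<forall>x\<in>A. \<forall>y\<in>A. (x, y) \<in> R \<and> x \<noteq> y \<longrightarrow> f x \<le> f y)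
       \<and> image_mset f (mset_set A) = mfrom 0 b}"
    then show "f \<in> GSet A R (\<lambda>_. 1) (mfrom 0 b)"
      by (auto simp: GSet_def ordp_def msum_one msum_one' PiE_def Pi_def)
  next
    fix f assume f: "f \<in> GSet A R (\<lambda>_. 1) (mfrom 0 b)"
    have pos: "f x > 0" if "x \<in> A" for x
    proof -
      have "f x \<in># msum A (\<lambda>_. 1) f" by (rule msum_mem) (use A that in auto)
      then have "f x \<in># mfrom 0 b" using f by (simp add: GSet_def)
      then show ?thesis using set_mfrom by blast
    qed
    then show "f \<in> {f \<in> A \<rightarrow>\<^sub>E {0<..}. (\<forall>x\<in>A. \<forall>y\<in>A. (x, y) \<in> R \<and> x \<noteq> y \<longrightarrow> f x \<le> f y)
       \<and> image_mset f (mset_set A) = mfrom 0 b}"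
      using f by (auto simp: GSet_def ordp_def msum_one msum_one' PiE_def Pi_def)
  qed
  then show ?thesis unfolding K_poset_def Gv_def GS_def by simp
qed

lemma msum_Suc:
  "msum {..<Suc n} (nth (k # ks)) f = replicate_mset k (f 0) + msum {..<n} (nth ks) (\<lambda>j. f (Suc j))"
  unfolding msum_def sum.lessThan_Suc_shift by simp

lemma PSL:
  assumes "0 \<notin> set ks" "0 \<notin># m"
  shows "power_sum_list ks m = real (GS {..<length ks} {} (nth ks) m)"
  using assms
proof (induction ks arbitrary: m)
  case Nil
  show ?case
  proof (cases "m = {#}")
    case True
    then show ?thesis using GS_empty by (simp add: series_one_def)
  next
    case False
    then have "GS {..<length []} {} (nth []) m = 0" by (intro GS_size) auto
    then show ?thesis using False by (simp add: series_one_def)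
  qed
next
  case (Cons k ks)
  have k: "k > 0" using Cons.prems by auto
  define n where "n = length ks"
  define I where "I = {i. 0 < i \<and> replicate_mset k i \<subseteq># m}"
  have Isub: "I \<subseteq> set_mset m"
  proof
    fix i assume "i \<in> I"
    then have "replicate_mset k i \<subseteq># m" by (simp add: I_def)
    then have "i \<in># replicate_mset k i \<longrightarrow> i \<in># m" by (meson mset_subset_eqD)
    then show "i \<in> set_mset m" using k by simp
  qed
  have finI: "finite I" using Isub finite_subset by blast
  have wpos: "\<forall>x\<in>{..<n}. (nth ks) x > 0" using Cons.prems unfolding n_def by (auto simp: in_set_conv_nth)
  have wpos': "\<forall>x\<in>{..<Suc n}. (nth (k # ks)) x > 0" using Cons.prems unfolding n_def
    by (auto simp: in_set_conv_nth less_Suc_eq_0_disj)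
  have "power_sum_list (k # ks) m = (\<Sum>m1\<in>{m1. m1 \<subseteq># m}. power_sum k m1 * power_sum_list ks (m - m1))"
    by (simp add: series_mult_def)
  also have "\<dots> = (\<Sum>m1\<in>{m1. m1 \<subseteq># m}. if \<exists>i>0. m1 = replicate_mset k i then power_sum_list ks (m - m1) else 0)"
  proof (rule sum.cong[OF refl])
    fix x show "power_sum k x * power_sum_list ks (m - x) =
      (if \<exists>i>0. x = replicate_mset k i then power_sum_list ks (m - x) else 0)"
      by (cases "\<exists>i>0. x = replicate_mset k i") (simp_all only: power_sum_def if_True if_False mult_1 mult_zero_left)
  qed
  also have "\<dots> = (\<Sum>m1\<in>{m1 \<in> {m1. m1 \<subseteq># m}. \<exists>i>0. m1 = replicate_mset k i}. power_sum_list ks (m - m1))"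
    by (rule sum.inter_filter[OF finite_msubsets, symmetric])
  also have "{m1 \<in> {m1. m1 \<subseteq># m}. \<exists>i>0. m1 = replicate_mset k i} = replicate_mset k ` I"
    unfolding I_def by auto
  also have "(\<Sum>m1\<in>replicate_mset k ` I. power_sum_list ks (m - m1)) = (\<Sum>i\<in>I. power_sum_list ks (m - replicate_mset k i))"
  proof (rule sum.reindex_cong[OF _ refl refl])
    show "inj_on (replicate_mset k) I"
    proof
      fix i j assume "replicate_mset k i = replicate_mset k j"
      then have "i \<in># replicate_mset k j" using k by (metis in_replicate_mset)
      then show "i = j" using k by (simp split: if_splits)
    qed
  qed
  also have "\<dots> = (\<Sum>i\<in>I. real (GS {..<n} {} (nth ks) (m - replicate_mset k i)))"
  proof (rule sum.cong[OF refl])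
    fix i assume "i \<in> I"
    have "0 \<notin># m - replicate_mset k i" using Cons.prems by (meson in_diffD)
    then show "power_sum_list ks (m - replicate_mset k i) = real (GS {..<n} {} (nth ks) (m - replicate_mset k i))"
      using Cons.IH Cons.prems unfolding n_def by simp
  qed
  finally have L: "power_sum_list (k # ks) m = (\<Sum>i\<in>I. real (GS {..<n} {} (nth ks) (m - replicate_mset k i)))" .
  define T where "T = Sigma I (\<lambda>i. GSet {..<n} {} (nth ks) (m - replicate_mset k i))"
  have bij: "bij_betw (\<lambda>f. (f 0, \<lambda>j\<in>{..<n}. f (Suc j))) (GSet {..<Suc n} {} (nth (k # ks)) m) T"
  proof (rule bij_betwI[where g="\<lambda>(i, g). (\<lambda>j. if j = 0 then i else g (j - 1))"])
    show "(\<lambda>f. (f 0, \<lambda>j\<in>{..<n}. f (Suc j))) \<in> GSet {..<Suc n} {} (nth (k # ks)) m \<rightarrow> T"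
    proof
      fix f assume f: "f \<in> GSet {..<Suc n} {} (nth (k # ks)) m"
      have ms: "replicate_mset k (f 0) + msum {..<n} (nth ks) (\<lambda>j. f (Suc j)) = m"
        using f msum_Suc[of n k ks f] by (simp add: GSet_def)
      have f0: "f 0 \<in># m" using ms k by (metis in_replicate_mset union_iff)
      then have "f 0 > 0" using Cons.prems by (metis gr0I)
      moreover have "replicate_mset k (f 0) \<subseteq># m" using ms by (metis mset_subset_eq_add_left)
      ultimately have fI: "f 0 \<in> I" by (simp add: I_def)
      have "msum {..<n} (nth ks) (\<lambda>j\<in>{..<n}. f (Suc j)) = msum {..<n} (nth ks) (\<lambda>j. f (Suc j))"
        by (rule msum_cong) simp
      also have "\<dots> = m - replicate_mset k (f 0)" using ms by (metis add_diff_cancel_left')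
      finally show "(f 0, \<lambda>j\<in>{..<n}. f (Suc j)) \<in> T" unfolding T_def GSet_def using fI
        by (simp add: ordp_def)
    qed
    show "(\<lambda>(i, g). (\<lambda>j. if j = 0 then i else g (j - 1))) \<in> T \<rightarrow> GSet {..<Suc n} {} (nth (k # ks)) m"
    proof
      fix p assume p: "p \<in> T"
      then obtain i g where pe: "p = (i, g)" and iI: "i \<in> I" and g: "g \<in> GSet {..<n} {} (nth ks) (m - replicate_mset k i)"
        unfolding T_def by auto
      let ?h = "\<lambda>j. if j = 0 then i else g (j - 1)"
      have hE: "?h \<in> {..<Suc n} \<rightarrow>\<^sub>E UNIV"
        using g by (auto simp: GSet_def PiE_def extensional_def)
      have "msum {..<Suc n} (nth (k # ks)) ?h = replicate_mset k i + msum {..<n} (nth ks) g"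
        using msum_Suc[of n k ks ?h] by simp
      also have "\<dots> = replicate_mset k i + (m - replicate_mset k i)" using g by (simp add: GSet_def)
      also have "\<dots> = m" using iI by (simp add: I_def)
      finally have "?h \<in> GSet {..<Suc n} {} (nth (k # ks)) m"
        unfolding GSet_def using hE by (simp add: ordp_def)
      then show "(\<lambda>(i', g'). (\<lambda>j. if j = 0 then i' else g' (j - 1))) p \<in> GSet {..<Suc n} {} (nth (k # ks)) m"
        unfolding pe by simp
    qed
    show "(\<lambda>(i, g). (\<lambda>j. if j = 0 then i else g (j - 1))) (f 0, \<lambda>j\<in>{..<n}. f (Suc j)) = f"
      if f: "f \<in> GSet {..<Suc n} {} (nth (k # ks)) m" for f
    proof
      fix j
      have fE: "f \<in> {..<Suc n} \<rightarrow>\<^sub>E UNIV" using f by (simp add: GSet_def)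
      show "(\<lambda>(i, g). (\<lambda>j. if j = 0 then i else g (j - 1))) (f 0, \<lambda>j\<in>{..<n}. f (Suc j)) j = f j"
      proof (cases j)
        case 0 then show ?thesis by simp
      next
        case (Suc j')
        show ?thesis
        proof (cases "j' < n")
          case True then show ?thesis using Suc by simp
        next
          case False
          then have "j \<notin> {..<Suc n}" using Suc by simp
          then show ?thesis using Suc False PiE_arb[OF fE] by simp
        qed
      qed
    qed
    show "(\<lambda>f. (f 0, \<lambda>j\<in>{..<n}. f (Suc j))) ((\<lambda>(i, g). (\<lambda>j. if j = 0 then i else g (j - 1))) p) = p"
      if p: "p \<in> T" for p
    proof -
      obtain i g where pe: "p = (i, g)" and g: "g \<in> GSet {..<n} {} (nth ks) (m - replicate_mset k i)"
        using p unfolding T_def by auto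
      have gE: "g \<in> {..<n} \<rightarrow>\<^sub>E UNIV" using g by (simp add: GSet_def)
      have "(\<lambda>j\<in>{..<n}. g j) = g"
      proof
        fix j show "(\<lambda>j\<in>{..<n}. g j) j = g j" using PiE_arb[OF gE, of j] by simp
      qed
      then show ?thesis unfolding pe by simp
    qed
  qed
  have "GS {..<Suc n} {} (nth (k # ks)) m = card T" unfolding GS_def using bij by (rule bij_betw_same_card)
  also have "\<dots> = (\<Sum>i\<in>I. GS {..<n} {} (nth ks) (m - replicate_mset k i))"
    unfolding T_def GS_def by (rule card_SigmaI[OF finI]) (use finite_GSet wpos in auto)
  finally show ?case using L unfolding n_def by (simp add: of_nat_sum)
qed

lemma mset_nth_image: "image_mset (nth xs) (mset_set {..<length xs}) = mset xs"
proof -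
  have "mset xs = mset (map (nth xs) [0..<length xs])" by (simp add: map_nth)
  also have "\<dots> = image_mset (nth xs) (mset_set {..<length xs})" by (simp add: mset_upt atLeast0LessThan)
  finally show ?thesis by simp
qed

definition mtype :: "nat multiset \<Rightarrow> nat multiset" where
  "mtype m = image_mset (count m) (mset_set (set_mset m))"

lemma set_msum_eq:
  assumes "finite X" "\<forall>x\<in>X. w x > 0"
  shows "set_mset (msum X w f) = f ` X"
  using set_msum[of X w f] msum_mem[OF assms(1)] assms(2) by blast

lemma count_msum: "count (msum X w f) v = (\<Sum>x\<in>X. if f x = v then w x else 0)"
  unfolding msum_def count_sum by (rule sum.cong) (auto simp: count_replicate_mset)

lemma GS_nonzero:
  assumes "GS X R w m \<noteq> 0"
  obtains f where "f \<in> X \<rightarrow>\<^sub>E UNIV" "ordp X R f" "msum X w f = m"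
proof -
  have "GSet X R w m \<noteq> {}" using assms unfolding GS_def by auto
  then obtain f where "f \<in> GSet X R w m" by blast
  then show ?thesis using that unfolding GSet_def by blast
qed

lemma A1:
  assumes X: "finite X" and w: "\<forall>x\<in>X. w x > 0" and ne: "GS X R w m \<noteq> 0"
  shows "card (set_mset m) \<le> card X"
proof -
  obtain f where "msum X w f = m" using GS_nonzero[OF ne] by blast
  then have "set_mset m = f ` X" using set_msum_eq[OF X w] by blast
  then show ?thesis using card_image_le[OF X] by simp
qed

lemma A2:
  assumes X: "finite X" and w: "\<forall>x\<in>X. w x > 0" and ne: "GS X R w m \<noteq> 0"
    and c: "card (set_mset m) = card X"
  shows "mtype m = image_mset w (mset_set X)"
proof -
  obtain f where fm: "msum X w f = m" using GS_nonzero[OF ne] by blast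
  then have s: "set_mset m = f ` X" using set_msum_eq[OF X w] by blast
  then have inj: "inj_on f X" using c eq_card_imp_inj_on[OF X] by simp
  have cnt: "count m (f x) = w x" if "x \<in> X" for x
  proof -
    have "count m (f x) = (\<Sum>y\<in>X. if f y = f x then w y else 0)" using fm count_msum by metis
    also have "\<dots> = (\<Sum>y\<in>X. if y = x then w y else 0)"
      by (rule sum.cong[OF refl]) (use inj that in \<open>auto dest: inj_onD\<close>)
    also have "\<dots> = w x" using X that by simp
    finally show ?thesis .
  qed
  have "mtype m = image_mset (count m) (mset_set (f ` X))" unfolding mtype_def s ..
  also have "\<dots> = image_mset (count m) (image_mset f (mset_set X))" using image_mset_mset_set[OF inj] by simp
  also have "\<dots> = image_mset (\<lambda>x. count m (f x)) (mset_set X)" by (simp add: multiset.map_comp comp_def)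
  also have "\<dots> = image_mset w (mset_set X)"
    by (rule image_mset_cong) (use cnt X in auto)
  finally show ?thesis .
qed

lemma A3:
  assumes X: "finite X" and w: "\<forall>x\<in>X. w x > 0" and inj: "inj_on s (set_mset m)"
  shows "GS X {} w (image_mset s m) = GS X {} w m"
proof -
  define t where "t = the_inv_into (set_mset m) s"
  have "bij_betw (\<lambda>f. restrict (s \<circ> f) X) (GSet X {} w m) (GSet X {} w (image_mset s m))"
  proof (rule bij_betwI[where g="\<lambda>f. restrict (t \<circ> f) X"])
    show "(\<lambda>f. restrict (s \<circ> f) X) \<in> GSet X {} w m \<rightarrow> GSet X {} w (image_mset s m)"
    proof
      fix f assume f: "f \<in> GSet X {} w m"
      have "msum X w (restrict (s \<circ> f) X) = msum X w (s \<circ> f)" by (rule msum_cong) simp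
      also have "\<dots> = image_mset s (msum X w f)" by (simp add: image_msum)
      finally show "restrict (s \<circ> f) X \<in> GSet X {} w (image_mset s m)"
        using f by (simp add: GSet_def ordp_def)
    qed
    show "(\<lambda>f. restrict (t \<circ> f) X) \<in> GSet X {} w (image_mset s m) \<rightarrow> GSet X {} w m"
    proof
      fix f assume f: "f \<in> GSet X {} w (image_mset s m)"
      have "msum X w (restrict (t \<circ> f) X) = msum X w (t \<circ> f)" by (rule msum_cong) simp
      also have "\<dots> = image_mset t (msum X w f)" by (simp add: image_msum)
      also have "\<dots> = image_mset t (image_mset s m)" using f by (simp add: GSet_def)
      also have "\<dots> = image_mset (t \<circ> s) m" by (simp add: multiset.map_comp)
      also have "\<dots> = image_mset id m"
        by (rule image_mset_cong) (simp add: t_def the_inv_into_f_f[OF inj])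
      finally show "restrict (t \<circ> f) X \<in> GSet X {} w m"
        using f by (simp add: GSet_def ordp_def)
    qed
    show "restrict (t \<circ> restrict (s \<circ> f) X) X = f" if f: "f \<in> GSet X {} w m" for f
    proof
      fix x
      have fE: "f \<in> X \<rightarrow>\<^sub>E UNIV" using f by (simp add: GSet_def)
      show "restrict (t \<circ> restrict (s \<circ> f) X) X x = f x"
      proof (cases "x \<in> X")
        case True
        have "f x \<in># msum X w f" using msum_mem[OF X True] w True by blast
        then have "f x \<in># m" using f by (simp add: GSet_def)
        then show ?thesis using True by (simp add: t_def the_inv_into_f_f[OF inj])
      next
        case False then show ?thesis using PiE_arb[OF fE False] by simp
      qed
    qed
    show "restrict (s \<circ> restrict (t \<circ> f) X) X = f" if f: "f \<in> GSet X {} w (image_mset s m)" for f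
    proof
      fix x
      have fE: "f \<in> X \<rightarrow>\<^sub>E UNIV" using f by (simp add: GSet_def)
      show "restrict (s \<circ> restrict (t \<circ> f) X) X x = f x"
      proof (cases "x \<in> X")
        case True
        have "f x \<in># msum X w f" using msum_mem[OF X True] w True by blast
        then have "f x \<in> s ` set_mset m" using f by (simp add: GSet_def)
        then show ?thesis using True by (simp add: t_def f_the_inv_into_f[OF inj])
      next
        case False then show ?thesis using PiE_arb[OF fE False] by simp
      qed
    qed
  qed
  then show ?thesis unfolding GS_def by (rule bij_betw_same_card[symmetric])
qed

lemma mfrom_msum: "mfrom s xs = msum {..<length xs} (nth xs) (\<lambda>i. Suc (s + i))"
proof (induction xs arbitrary: s)
  case Nil
  then show ?case by (simp add: msum_def)
next
  case (Cons x xs)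
  show ?case unfolding length_Cons msum_Suc using Cons.IH[of "Suc s"] by simp
qed

lemma A5:
  assumes "0 \<notin> set xs"
  shows "GS {..<length xs} {} (nth xs) (mfrom 0 xs) > 0"
proof -
  have "restrict (\<lambda>i. Suc i) {..<length xs} \<in> GSet {..<length xs} {} (nth xs) (mfrom 0 xs)"
  proof -
    have "msum {..<length xs} (nth xs) (restrict (\<lambda>i. Suc i) {..<length xs}) = msum {..<length xs} (nth xs) (\<lambda>i. Suc (0 + i))"
      by (rule msum_cong) simp
    then show ?thesis by (simp add: GSet_def ordp_def mfrom_msum)
  qed
  moreover have "finite (GSet {..<length xs} {} (nth xs) (mfrom 0 xs))"
    by (rule finite_GSet) (use assms in \<open>auto simp: in_set_conv_nth\<close>)
  ultimately show ?thesis unfolding GS_def by (metis card_0_eq empty_iff gr0I)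
qed

lemma exists_enum:
  assumes "finite A" "image_mset f (mset_set A) = mset xs"
  shows "\<exists>g. bij_betw g {..<length xs} A \<and> (\<forall>i<length xs. f (g i) = xs ! i)"
  using assms
proof (induction xs arbitrary: A)
  case Nil
  then have "A = {}" by (simp add: mset_set_empty_iff)
  then show ?case by (simp add: bij_betw_def)
next
  case (Cons x xs)
  have "x \<in># image_mset f (mset_set A)" using Cons.prems by simp
  then obtain a where a: "a \<in> A" "f a = x" using Cons.prems(1) by auto
  have r: "mset_set A = add_mset a (mset_set (A - {a}))" by (rule mset_set.remove[OF Cons.prems(1) a(1)])
  have "image_mset f (mset_set (A - {a})) = mset xs" using Cons.prems(2) a r by simp
  then obtain g' where g': "bij_betw g' {..<length xs} (A - {a})" "\<forall>i<length xs. f (g' i) = xs ! i"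
    using Cons.IH[of "A - {a}"] Cons.prems(1) by auto
  define g where "g = (\<lambda>i. if i = 0 then a else g' (i - 1))"
  have img: "g ` {..<length (x # xs)} = A"
  proof -
    have "{..<length (x # xs)} = insert 0 (Suc ` {..<length xs})" by (simp add: lessThan_Suc_eq_insert_0)
    moreover have "g ` (Suc ` {..<length xs}) = (\<lambda>i. g (Suc i)) ` {..<length xs}" by (simp add: image_image)
    moreover have "(\<lambda>i. g (Suc i)) = g'" by (simp add: g_def fun_eq_iff)
    ultimately have "g ` {..<length (x # xs)} = insert a (g' ` {..<length xs})"
      by (simp add: g_def)
    also have "\<dots> = A" using g'(1) a(1) by (auto simp: bij_betw_def)
    finally show ?thesis .
  qed
  have inj: "inj_on g {..<length (x # xs)}"
  proof
    fix i j assume i: "i \<in> {..<length (x # xs)}" and j: "j \<in> {..<length (x # xs)}" and e: "g i = g j"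
    have g'in: "g' k \<in> A - {a}" if "k < length xs" for k using g'(1) that by (auto simp: bij_betw_def)
    show "i = j"
    proof (cases "i = 0")
      case True
      show ?thesis
      proof (rule ccontr)
        assume "i \<noteq> j"
        then have "j > 0" using True by simp
        then have "g j \<in> A - {a}" using j g'in[of "j - 1"] by (simp add: g_def)
        then show False using e True by (simp add: g_def)
      qed
    next
      case False
      show ?thesis
      proof (cases "j = 0")
        case True
        have "g i \<in> A - {a}" using i False g'in[of "i - 1"] by (simp add: g_def)
        then show ?thesis using e True by (simp add: g_def)
      next
        case F2: False
        have "g' (i - 1) = g' (j - 1)" using e False F2 by (simp add: g_def)
        then have "i - 1 = j - 1" using g'(1) i j False F2 by (auto simp: bij_betw_def dest: inj_onD)
        then show ?thesis using False F2 by simp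
      qed
    qed
  qed
  have vals: "\<forall>i<length (x # xs). f (g i) = (x # xs) ! i"
  proof (intro allI impI)
    fix i assume "i < length (x # xs)"
    then show "f (g i) = (x # xs) ! i" using a g'(2) by (cases i) (auto simp: g_def)
  qed
  show ?case using img inj vals by (auto simp: bij_betw_def)
qed

lemma msum_count_self: "msum (set_mset m) (count m) id = m"
proof (rule multiset_eqI)
  fix u
  have "count (msum (set_mset m) (count m) id) u = (\<Sum>v\<in>set_mset m. if v = u then count m v else 0)"
    using count_msum[of "set_mset m" "count m" id u] by simp
  also have "\<dots> = count m u" by (simp add: sum.delta' count_eq_zero_iff[symmetric])
  finally show "count (msum (set_mset m) (count m) id) u = count m u" .
qed

lemma bij_shift: "bij_betw (\<lambda>v. v - 1) {0<..(n::nat)} {..<n}"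
  by (rule bij_betwI[where g=Suc]) auto

lemma sym_construct:
  assumes pos: "set_mset m \<subseteq> {0<..}"
  shows "\<exists>s. bij_betw s {0<..} {0<..} \<and> image_mset s (mfrom 0 (sorted_list_of_multiset (mtype m))) = m"
proof -
  define xs where "xs = sorted_list_of_multiset (mtype m)"
  define n where "n = length xs"
  define M where "M = set_mset m"
  define B where "B = {0<..n}"
  have fM: "finite M" unfolding M_def by simp
  have "image_mset (count m) (mset_set M) = mset xs" unfolding xs_def M_def mtype_def by simp
  then obtain g where g: "bij_betw g {..<n} M" "\<forall>i<n. count m (g i) = xs ! i"
    using exists_enum[OF fM] unfolding n_def by blast
  have cardM: "card M = n" using bij_betw_same_card[OF g(1)] by simp
  have cardB: "card B = n" unfolding B_def by simp
  have fB: "finite B" unfolding B_def by simp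
  have "card (M - B) = card (B - M)"
    using card_Diff_subset_Int[of "M \<inter> B" M] fM fB cardM cardB
    by (metis Diff_Int2 Int_commute card_Diff_subset_Int finite_Int inf.idem)
  then obtain k where k: "bij_betw k (M - B) (B - M)"
    using finite_same_card_bij[of "M - B" "B - M"] fM fB by auto
  define s where "s = (\<lambda>v. if v \<in> B then g (v - 1) else if v \<in> M then k v else v)"
  have b1: "bij_betw s B M"
  proof -
    have "bij_betw (g \<circ> (\<lambda>v. v - 1)) B M" unfolding B_def using bij_betw_trans[OF bij_shift g(1)] .
    then show ?thesis by (rule bij_betw_cong[THEN iffD1, rotated]) (simp add: s_def)
  qed
  have b2: "bij_betw s (M - B) (B - M)"
    using k by (rule bij_betw_cong[THEN iffD1, rotated]) (simp add: s_def)
  have b3: "bij_betw s ({0<..} - (B \<union> M)) ({0<..} - (B \<union> M))"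
    using bij_betw_id by (rule bij_betw_cong[THEN iffD1, rotated]) (simp add: s_def)
  have b12: "bij_betw s (B \<union> (M - B)) (M \<union> (B - M))" by (rule bij_betw_combine[OF b1 b2]) auto
  have b123: "bij_betw s ((B \<union> (M - B)) \<union> ({0<..} - (B \<union> M))) ((M \<union> (B - M)) \<union> ({0<..} - (B \<union> M)))"
    by (rule bij_betw_combine[OF b12 b3]) auto
  have MB: "M \<subseteq> {0<..}" "B \<subseteq> {0<..}" using pos unfolding M_def B_def by auto
  have e1: "(B \<union> (M - B)) \<union> ({0<..} - (B \<union> M)) = {0<..}" using MB by auto
  have e2: "(M \<union> (B - M)) \<union> ({0<..} - (B \<union> M)) = {0<..}" using MB by auto
  have bij: "bij_betw s {0<..} {0<..}" using b123 unfolding e1 e2 .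
  have "image_mset s (mfrom 0 xs) = image_mset s (msum {..<n} (nth xs) (\<lambda>i. Suc i))"
    unfolding n_def using mfrom_msum[of 0 xs] by simp
  also have "\<dots> = msum {..<n} (nth xs) (s \<circ> Suc)" by (simp add: image_msum comp_def)
  also have "\<dots> = msum {..<n} (nth xs) g" by (rule msum_cong) (simp add: s_def B_def)
  also have "\<dots> = (\<Sum>i<n. replicate_mset (count m (g i)) (g i))"
    unfolding msum_def using g(2) by simp
  also have "\<dots> = (\<Sum>v\<in>M. replicate_mset (count m v) v)"
    by (rule sum.reindex_bij_betw[OF g(1)])
  also have "\<dots> = m" using msum_count_self[of m] unfolding msum_def M_def by simp
  finally show ?thesis using bij unfolding xs_def by blast
qed

definition canon :: "nat multiset \<Rightarrow> nat multiset" where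
  "canon lam = mfrom 0 (sorted_list_of_multiset lam)"

lemma canon_pos: "set_mset (canon lam) \<subseteq> {0<..}"
  unfolding canon_def using set_mfrom by fastforce

lemma sym_canon:
  assumes "symmetric_series G" "set_mset m \<subseteq> {0<..}"
  shows "G m = G (canon (mtype m))"
proof -
  obtain s where s: "bij_betw s {0<..} {0<..}" "image_mset s (canon (mtype m)) = m"
    using sym_construct[OF assms(2)] unfolding canon_def by blast
  have "G (image_mset s (canon (mtype m))) = G (canon (mtype m))"
    using assms(1) s(1) canon_pos unfolding symmetric_series_def by blast
  then show ?thesis using s(2) by simp
qed

abbreviation xsl :: "nat multiset \<Rightarrow> nat list" where
  "xsl lam \<equiv> sorted_list_of_multiset lam"

lemma len_xsl[simp]: "length (xsl lam) = size lam"
  by (metis mset_sorted_list_of_multiset size_mset)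

lemma set_xsl[simp]: "set (xsl lam) = set_mset lam"
  by simp

lemma PSL_zero: "power_sum_list ks m \<noteq> 0 \<Longrightarrow> 0 \<notin># m"
proof (induction ks arbitrary: m)
  case Nil
  then show ?case by (simp add: series_one_def split: if_splits)
next
  case (Cons k ks)
  have "(\<Sum>m1\<in>{m1. m1 \<subseteq># m}. power_sum k m1 * power_sum_list ks (m - m1)) \<noteq> 0"
    using Cons.prems by (simp add: series_mult_def)
  then obtain m1 where m1: "m1 \<subseteq># m" "power_sum k m1 * power_sum_list ks (m - m1) \<noteq> 0"
    by (rule sum.not_neutral_contains_not_neutral) auto
  then have "power_sum k m1 \<noteq> 0" "power_sum_list ks (m - m1) \<noteq> 0" by auto
  then obtain i where i: "i > 0" "m1 = replicate_mset k i" and r: "0 \<notin># m - m1"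
    using Cons.IH by (auto simp: power_sum_def split: if_splits)
  have "0 \<notin># m1" using i by simp
  moreover have "m = m1 + (m - m1)" using m1(1) by simp
  ultimately show ?case using r by (metis union_iff)
qed

lemma xsl_pos: "is_partition lam \<Longrightarrow> 0 \<notin> set (xsl lam)"
  by (simp add: is_partition_def)

lemma P_GS:
  assumes "is_partition lam" "0 \<notin># m"
  shows "power_sum_part lam m = real (GS {..<size lam} {} (nth (xsl lam)) m)"
  using PSL[OF xsl_pos[OF assms(1)] assms(2)] unfolding power_sum_part_def by simp

lemma wpos_xsl: "is_partition lam \<Longrightarrow> \<forall>x\<in>{..<size lam}. nth (xsl lam) x > 0"
proof
  fix x assume p: "is_partition lam" and x: "x \<in> {..<size lam}"
  then have "xsl lam ! x \<in> set (xsl lam)" using nth_mem[of x "xsl lam"] by simp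
  then show "xsl lam ! x > 0" using p by (auto simp: is_partition_def intro!: Nat.gr0I)
qed

lemma SP1: "power_sum_part lam m \<noteq> 0 \<Longrightarrow> 0 \<notin># m"
  unfolding power_sum_part_def by (rule PSL_zero)

lemma SP_GS:
  assumes "is_partition lam" "power_sum_part lam m \<noteq> 0"
  shows "GS {..<size lam} {} (nth (xsl lam)) m \<noteq> 0"
  using P_GS[OF assms(1) SP1[OF assms(2)]] assms(2) by simp

lemma SP2:
  assumes "is_partition lam" "power_sum_part lam m \<noteq> 0"
  shows "size m = sum_mset lam"
proof -
  have "size m = sum (nth (xsl lam)) {..<size lam}"
    using GS_size[of "{..<size lam}" m "nth (xsl lam)" "{}"] SP_GS[OF assms] by auto
  also have "\<dots> = sum_list (xsl lam)" by (simp add: sum_list_sum_nth atLeast0LessThan)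
  also have "\<dots> = sum_mset lam" by (metis mset_sorted_list_of_multiset sum_mset_sum_list)
  finally show ?thesis .
qed

lemma SP3:
  assumes "is_partition lam" "power_sum_part lam m \<noteq> 0"
  shows "card (set_mset m) \<le> size lam"
  using A1[OF _ wpos_xsl[OF assms(1)] SP_GS[OF assms]] by simp

lemma SP4:
  assumes "is_partition lam" "power_sum_part lam m \<noteq> 0" "card (set_mset m) = size lam"
  shows "mtype m = lam"
proof -
  have "mtype m = image_mset (nth (xsl lam)) (mset_set {..<size lam})"
    using A2[OF _ wpos_xsl[OF assms(1)] SP_GS[OF assms(1,2)]] assms(3) by simp
  also have "\<dots> = mset (xsl lam)" using mset_nth_image[of "xsl lam"] by simp
  finally show ?thesis by simp
qed

lemma SP5:
  assumes "is_partition lam"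
  shows "power_sum_part lam (canon lam) > 0"
proof -
  have z: "0 \<notin># canon lam" using canon_pos by blast
  have "GS {..<length (xsl lam)} {} (nth (xsl lam)) (mfrom 0 (xsl lam)) > 0"
    by (rule A5[OF xsl_pos[OF assms]])
  then show ?thesis using P_GS[OF assms z] unfolding canon_def by simp
qed

lemma SP6:
  assumes "is_partition lam"
  shows "symmetric_series (power_sum_part lam)"
  unfolding symmetric_series_def
proof (intro allI impI)
  fix s :: "nat \<Rightarrow> nat" and m :: "nat multiset" assume s: "bij_betw s {0<..} {0<..}" and m: "set_mset m \<subseteq> {0<..}"
  have inj: "inj_on s (set_mset m)" using s m by (meson bij_betw_imp_inj_on inj_on_subset)
  have z1: "0 \<notin># m" using m by auto
  have "set_mset (image_mset s m) \<subseteq> {0<..}" using s m by (auto simp: bij_betw_def)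
  then have z2: "0 \<notin># image_mset s m" by auto
  show "power_sum_part lam (image_mset s m) = power_sum_part lam m"
    unfolding P_GS[OF assms z1] P_GS[OF assms z2]
    using A3[OF _ wpos_xsl[OF assms] inj] by simp
qed

definition in_span :: "series \<Rightarrow> bool" where
  "in_span F \<longleftrightarrow> (\<exists>S c. finite S \<and> (\<forall>lam\<in>S. is_partition lam) \<and>
      F = (\<lambda>m. \<Sum>lam\<in>S. c lam * power_sum_part lam m))"

lemma card_set_le_size: "card (set_mset m) \<le> size m"
proof -
  have "card (set_mset m) = (\<Sum>v\<in>set_mset m. 1)" by simp
  also have "\<dots> \<le> (\<Sum>v\<in>set_mset m. count m v)" by (rule sum_mono) (simp add: Suc_le_eq)
  also have "\<dots> = size m" by (simp add: size_multiset_overloaded_eq)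
  finally show ?thesis .
qed

lemma mtype_props:
  assumes "size m \<le> M"
  shows "set_mset (mtype m) \<subseteq> {1..M}" "size (mtype m) = card (set_mset m)" "sum_mset (mtype m) = size m"
proof -
  show "set_mset (mtype m) \<subseteq> {1..M}"
  proof
    fix v assume "v \<in># mtype m"
    then obtain u where u: "u \<in># m" "v = count m u" unfolding mtype_def by auto
    then have "v \<ge> 1" by (simp add: Suc_le_eq)
    moreover have "v \<le> M" using u count_le_size[of m u] assms by simp
    ultimately show "v \<in> {1..M}" by simp
  qed
  show "size (mtype m) = card (set_mset m)" unfolding mtype_def by simp
  show "sum_mset (mtype m) = size m" unfolding mtype_def
    by (simp add: sum_unfold_sum_mset[symmetric] size_multiset_overloaded_eq)
qed

lemma span_aux:
  "\<forall>F. symmetric_series F \<and> (\<forall>m. F m \<noteq> 0 \<longrightarrow> 0 \<notin># m \<and> size m \<le> M \<and> card (set_mset m) \<le> B) \<longrightarrow> in_span F"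
proof (induction B)
  case 0
  show ?case
  proof (intro allI impI)
    fix F assume H: "symmetric_series F \<and> (\<forall>m. F m \<noteq> 0 \<longrightarrow> 0 \<notin># m \<and> size m \<le> M \<and> card (set_mset m) \<le> 0)"
    have e: "F m = 0" if "m \<noteq> {#}" for m
    proof (rule ccontr)
      assume "F m \<noteq> 0"
      then have "card (set_mset m) = 0" using H by auto
      then have "set_mset m = {}" by simp
      then show False using that by simp
    qed
    have "F = (\<lambda>m. \<Sum>lam\<in>{{#}}. (\<lambda>_. F {#}) lam * power_sum_part lam m)"
    proof
      fix m show "F m = (\<Sum>lam\<in>{{#}}. (\<lambda>_. F {#}) lam * power_sum_part lam m)"
        using e[of m] by (cases "m = {#}") (simp_all add: power_sum_part_def series_one_def)
    qed
    then show "in_span F" unfolding in_span_def by (intro exI[of _ "{{#}}"] exI) (simp add: is_partition_def)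
  qed
next
  case (Suc B)
  show ?case
  proof (intro allI impI)
    fix F assume H: "symmetric_series F \<and> (\<forall>m. F m \<noteq> 0 \<longrightarrow> 0 \<notin># m \<and> size m \<le> M \<and> card (set_mset m) \<le> Suc B)"
    then have symF: "symmetric_series F" and HF: "\<And>m. F m \<noteq> 0 \<Longrightarrow> 0 \<notin># m \<and> size m \<le> M \<and> card (set_mset m) \<le> Suc B"
      by auto
    define T where "T = {lam. set_mset lam \<subseteq> {1..M} \<and> size lam = Suc B \<and> sum_mset lam \<le> M}"
    have finT: "finite T"
    proof (rule finite_subset)
      show "T \<subseteq> mset ` {xs. set xs \<subseteq> {1..M} \<and> length xs = Suc B}"
      proof
        fix lam assume "lam \<in> T"
        then have "xsl lam \<in> {xs. set xs \<subseteq> {1..M} \<and> length xs = Suc B}" by (simp add: T_def)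
        moreover have "lam = mset (xsl lam)" by simp
        ultimately show "lam \<in> mset ` {xs. set xs \<subseteq> {1..M} \<and> length xs = Suc B}"
          by (rule rev_image_eqI)
      qed
      show "finite (mset ` {xs. set xs \<subseteq> {1..M} \<and> length xs = Suc B})"
        by (rule finite_imageI, rule finite_lists_length_eq) simp
    qed
    have partT: "\<forall>lam\<in>T. is_partition lam" unfolding T_def is_partition_def by auto
    define c where "c lam = F (canon lam) / power_sum_part lam (canon lam)" for lam
    define F' where "F' m = F m - (\<Sum>lam\<in>T. c lam * power_sum_part lam m)" for m
    have symF': "symmetric_series F'"
      unfolding symmetric_series_def
    proof (intro allI impI)
      fix s :: "nat \<Rightarrow> nat" and m :: "nat multiset"
      assume s: "bij_betw s {0<..} {0<..}" and m: "set_mset m \<subseteq> {0<..}"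
      have "F (image_mset s m) = F m" using symF s m unfolding symmetric_series_def by blast
      moreover have "power_sum_part lam (image_mset s m) = power_sum_part lam m" if "lam \<in> T" for lam
        using SP6[of lam] partT that s m unfolding symmetric_series_def by blast
      ultimately show "F' (image_mset s m) = F' m" unfolding F'_def by simp
    qed
    have suppF': "0 \<notin># m \<and> size m \<le> M" if "F' m \<noteq> 0" for m
    proof (cases "F m \<noteq> 0")
      case True
      then show ?thesis using HF by blast
    next
      case False
      then have "(\<Sum>lam\<in>T. c lam * power_sum_part lam m) \<noteq> 0" using that by (simp add: F'_def)
      then obtain lam where lam: "lam \<in> T" "c lam * power_sum_part lam m \<noteq> 0"
        by (rule sum.not_neutral_contains_not_neutral)
      then have "power_sum_part lam m \<noteq> 0" by simp
      then show ?thesis using SP1 SP2[OF partT[rule_format, OF lam(1)]] lam(1) by (auto simp: T_def)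
    qed
    have cardF': "card (set_mset m) \<le> B" if nz: "F' m \<noteq> 0" for m
    proof (rule ccontr)
      assume "\<not> card (set_mset m) \<le> B"
      then have ge: "card (set_mset m) \<ge> Suc B" by simp
      have z: "0 \<notin># m" and sM: "size m \<le> M" using suppF'[OF nz] by auto
      show False
      proof (cases "card (set_mset m) = Suc B")
        case False
        then have gt: "card (set_mset m) > Suc B" using ge by simp
        have "F m = 0"
        proof (rule ccontr)
          assume "F m \<noteq> 0"
          then have "card (set_mset m) \<le> Suc B" using HF by blast
          then show False using gt by simp
        qed
        moreover have "power_sum_part lam m = 0" if "lam \<in> T" for lam
        proof (rule ccontr)
          assume "power_sum_part lam m \<noteq> 0"
          then have "card (set_mset m) \<le> size lam" using SP3[OF partT[rule_format, OF that]] by blast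
          then show False using that gt by (simp add: T_def)
        qed
        ultimately have "F' m = 0" by (simp add: F'_def)
        then show False using nz by simp
      next
        case True
        define lam0 where "lam0 = mtype m"
        have l0T: "lam0 \<in> T" using mtype_props[OF sM] True sM unfolding T_def lam0_def by simp
        have mpos: "set_mset m \<subseteq> {0<..}" using z by (auto intro: Nat.gr0I)
        have "F' m = F' (canon lam0)" unfolding lam0_def by (rule sym_canon[OF symF' mpos])
        have zero: "power_sum_part lam (canon lam0) = 0" if "lam \<in> T" "lam \<noteq> lam0" for lam
        proof -
          have "power_sum_part lam m = power_sum_part lam (canon lam0)"
            unfolding lam0_def by (rule sym_canon[OF SP6[OF partT[rule_format, OF that(1)]] mpos])
          moreover have "power_sum_part lam m = 0"
          proof (rule ccontr)
            assume "power_sum_part lam m \<noteq> 0"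
            then have "mtype m = lam" using SP4[OF partT[rule_format, OF that(1)]] True that(1)
              by (simp add: T_def)
            then show False using that(2) lam0_def by simp
          qed
          ultimately show ?thesis by simp
        qed
        have "(\<Sum>lam\<in>T. c lam * power_sum_part lam (canon lam0)) = c lam0 * power_sum_part lam0 (canon lam0)"
        proof -
          have "(\<Sum>lam\<in>T. c lam * power_sum_part lam (canon lam0)) =
            (\<Sum>lam\<in>T. if lam = lam0 then c lam * power_sum_part lam (canon lam0) else 0)"
            by (rule sum.cong[OF refl]) (use zero in auto)
          also have "\<dots> = c lam0 * power_sum_part lam0 (canon lam0)" using finT l0T by simp
          finally show ?thesis .
        qed
        also have "\<dots> = F (canon lam0)"
          using SP5[OF partT[rule_format, OF l0T]] by (simp add: c_def)
        finally have "F' (canon lam0) = 0" by (simp add: F'_def)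
        then show False using nz \<open>F' m = F' (canon lam0)\<close> by simp
      qed
    qed
    have "symmetric_series F' \<and> (\<forall>m. F' m \<noteq> 0 \<longrightarrow> 0 \<notin># m \<and> size m \<le> M \<and> card (set_mset m) \<le> B)"
      using symF' suppF' cardF' by simp
    then have "in_span F'" by (rule Suc.IH[rule_format])
    then obtain S' c' where S': "finite S'" "\<forall>lam\<in>S'. is_partition lam"
      and F'e: "F' = (\<lambda>m. \<Sum>lam\<in>S'. c' lam * power_sum_part lam m)"
      unfolding in_span_def by blast
    define c2 where "c2 lam = (if lam \<in> S' then c' lam else 0) + (if lam \<in> T then c lam else 0)" for lam
    have "F = (\<lambda>m. \<Sum>lam\<in>S' \<union> T. c2 lam * power_sum_part lam m)"
    proof
      fix m
      have fU: "finite (S' \<union> T)" using S'(1) finT by simp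
      have "(\<Sum>lam\<in>S' \<union> T. c2 lam * power_sum_part lam m) =
          (\<Sum>lam\<in>S' \<union> T. if lam \<in> S' then c' lam * power_sum_part lam m else 0) +
          (\<Sum>lam\<in>S' \<union> T. if lam \<in> T then c lam * power_sum_part lam m else 0)"
        unfolding c2_def sum.distrib[symmetric] by (rule sum.cong[OF refl]) (simp add: distrib_right)
      also have "\<dots> = (\<Sum>lam\<in>(S' \<union> T) \<inter> S'. c' lam * power_sum_part lam m) +
          (\<Sum>lam\<in>(S' \<union> T) \<inter> T. c lam * power_sum_part lam m)"
        using sum.inter_restrict[OF fU, of "\<lambda>lam. c' lam * power_sum_part lam m" S']
          sum.inter_restrict[OF fU, of "\<lambda>lam. c lam * power_sum_part lam m" T] by simp
      also have "(S' \<union> T) \<inter> S' = S'" by auto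
      also have "(S' \<union> T) \<inter> T = T" by auto
      also have "(\<Sum>lam\<in>S'. c' lam * power_sum_part lam m) = F' m" using F'e by simp
      also have "F' m + (\<Sum>lam\<in>T. c lam * power_sum_part lam m) = F m" by (simp add: F'_def)
      finally show "F m = (\<Sum>lam\<in>S' \<union> T. c2 lam * power_sum_part lam m)" by simp
    qed
    then show "in_span F" unfolding in_span_def using S' finT partT
      by (intro exI[of _ "S' \<union> T"] exI[of _ c2]) auto
  qed
qed

lemma K_nonzero:
  assumes "finite X" "K_poset X Rel m \<noteq> 0"
  shows "0 \<notin># m \<and> size m = card X"
proof -
  have "{f \<in> X \<rightarrow>\<^sub>E {0<..}. (\<forall>x\<in>X. \<forall>y\<in>X. (x, y) \<in> Rel \<and> x \<noteq> y \<longrightarrow> f x \<le> f y)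
       \<and> image_mset f (mset_set X) = m} \<noteq> {}"
  proof
    assume "{f \<in> X \<rightarrow>\<^sub>E {0<..}. (\<forall>x\<in>X. \<forall>y\<in>X. (x, y) \<in> Rel \<and> x \<noteq> y \<longrightarrow> f x \<le> f y)
       \<and> image_mset f (mset_set X) = m} = {}"
    then have "K_poset X Rel m = 0" unfolding K_poset_def by (simp only: card.empty of_nat_0)
    then show False using assms(2) by simp
  qed
  then obtain f where f: "f \<in> X \<rightarrow>\<^sub>E {0<..}" "image_mset f (mset_set X) = m" by blast
  have pos: "\<forall>x\<in>X. f x > 0" using f(1) by (auto simp: PiE_iff)
  have "0 \<notin># m"
  proof
    assume "0 \<in># m"
    then obtain x where x: "x \<in> X" "f x = 0" using f(2) assms(1) by auto
    then show False using pos by (metis less_irrefl)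
  qed
  moreover have "size m = card X" using f(2) by (metis size_image_mset size_mset_set)
  ultimately show ?thesis by simp
qed

lemma trans_empty: "trans {}"
  by (simp add: trans_def)

theorem corollary4p3:
  fixes I :: "'i set" and A :: "'i \<Rightarrow> 'a set" and R :: "'i \<Rightarrow> 'a rel"
  assumes "finite I"
    and "\<forall>i\<in>I. finite (A i) \<and> partial_order_on (A i) (R i)"
    and "symmetric_series (\<lambda>m. \<Sum>i\<in>I. K_poset (A i) (R i) m)"
  shows "p_positive (\<lambda>m. \<Sum>i\<in>I. K_poset (A i) (R i) m)"
proof -
  note fI = assms(1) and hA = assms(2)
  define F where "F = (\<lambda>m. \<Sum>i\<in>I. K_poset (A i) (R i) m)"
  have sym: "symmetric_series F" using assms(3) unfolding F_def .
  define M where "M = (\<Sum>i\<in>I. card (A i))"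
  have supp: "0 \<notin># m \<and> size m \<le> M \<and> card (set_mset m) \<le> M" if "F m \<noteq> 0" for m
  proof -
    obtain i where i: "i \<in> I" "K_poset (A i) (R i) m \<noteq> 0"
      using \<open>F m \<noteq> 0\<close> unfolding F_def by (rule sum.not_neutral_contains_not_neutral)
    have k: "0 \<notin># m \<and> size m = card (A i)" using K_nonzero[OF _ i(2)] hA i(1) by blast
    have "card (A i) \<le> M" unfolding M_def using member_le_sum[of i I "\<lambda>i. card (A i)"] fI i(1) by simp
    then show ?thesis using k card_set_le_size[of m] by simp
  qed
  have "in_span F" using span_aux[of M M] sym supp by blast
  then obtain S c where S: "finite S" "\<forall>lam\<in>S. is_partition lam"
    and Fe: "F = (\<lambda>m. \<Sum>lam\<in>S. c lam * power_sum_part lam m)"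
    unfolding in_span_def by blast
  have nonneg: "c lam0 \<ge> 0" if l0: "lam0 \<in> S" for lam0
  proof -
    define al where "al = xsl lam0"
    have alpos: "\<forall>a\<in>set al. a > 0" using xsl_pos[of lam0] S(2) l0 unfolding al_def by (auto intro: Nat.gr0I)
    have z: "0 \<notin># mfrom 0 b" for b using set_mfrom[of 0 0 b] by auto
    have "phi al (\<lambda>b. F (mfrom 0 b)) = (\<Sum>i\<in>I. phi al (\<lambda>b. K_poset (A i) (R i) (mfrom 0 b)))"
      unfolding F_def by (rule phi_sum)
    also have "\<dots> = (\<Sum>i\<in>I. Psi (A i) (R i) (\<lambda>_. 1) al)"
    proof (rule sum.cong[OF refl])
      fix i assume i: "i \<in> I"
      have fA: "finite (A i)" and tr: "trans (R i)" using hA i partial_order_onD(2) by blast+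
      have "phi al (\<lambda>b. K_poset (A i) (R i) (mfrom 0 b)) = phi al (Gv (A i) (R i) (\<lambda>_. 1))"
        using K_Gv[OF fA] by simp
      also have "\<dots> = Psi (A i) (R i) (\<lambda>_. 1) al" by (rule phi_Psi[OF fA _ tr alpos]) simp
      finally show "phi al (\<lambda>b. K_poset (A i) (R i) (mfrom 0 b)) = Psi (A i) (R i) (\<lambda>_. 1) al" .
    qed
    finally have e1: "phi al (\<lambda>b. F (mfrom 0 b)) = (\<Sum>i\<in>I. Psi (A i) (R i) (\<lambda>_. 1) al)" .
    have ge: "phi al (\<lambda>b. F (mfrom 0 b)) \<ge> 0" unfolding e1 by (rule sum_nonneg) (rule Psi_nonneg)
    define Q where "Q lam = Psi {..<size lam} {} (nth (xsl lam)) al" for lam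
    have "phi al (\<lambda>b. F (mfrom 0 b)) = phi al (\<lambda>b. \<Sum>lam\<in>S. c lam * power_sum_part lam (mfrom 0 b))"
      using Fe by simp
    also have "\<dots> = (\<Sum>lam\<in>S. c lam * phi al (\<lambda>b. power_sum_part lam (mfrom 0 b)))"
      by (simp add: phi_sum phi_mult)
    also have "\<dots> = (\<Sum>lam\<in>S. c lam * Q lam)"
    proof (rule sum.cong[OF refl])
      fix lam assume lam: "lam \<in> S"
      have p: "is_partition lam" using S(2) lam by blast
      have "(\<lambda>b. power_sum_part lam (mfrom 0 b)) = Gv {..<size lam} {} (nth (xsl lam))"
        using P_GS[OF p z] by (simp add: Gv_def fun_eq_iff)
      then have "phi al (\<lambda>b. power_sum_part lam (mfrom 0 b)) = Q lam"
        unfolding Q_def using phi_Psi[OF _ wpos_xsl[OF p] trans_empty alpos] by simp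
      then show "c lam * phi al (\<lambda>b. power_sum_part lam (mfrom 0 b)) = c lam * Q lam" by simp
    qed
    also have "\<dots> = (\<Sum>lam\<in>S. if lam = lam0 then c lam * Q lam else 0)"
    proof (rule sum.cong[OF refl])
      fix lam assume lam: "lam \<in> S"
      have p: "is_partition lam" using S(2) lam by blast
      have iff: "Q lam > 0 \<longleftrightarrow> lam = lam0"
      proof -
        have "Q lam > 0 \<longleftrightarrow> image_mset (nth (xsl lam)) (mset_set {..<size lam}) = mset al"
          unfolding Q_def by (rule Psi_antichain_pos[OF _ wpos_xsl[OF p]]) simp
        also have "image_mset (nth (xsl lam)) (mset_set {..<size lam}) = lam"
          using mset_nth_image[of "xsl lam"] by simp
        also have "mset al = lam0" unfolding al_def by simp
        finally show ?thesis .
      qed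
      have "Q lam \<ge> 0" unfolding Q_def by (rule Psi_nonneg)
      then show "c lam * Q lam = (if lam = lam0 then c lam * Q lam else 0)" using iff by auto
    qed
    also have "\<dots> = c lam0 * Q lam0" using S(1) l0 by simp
    finally have e2: "phi al (\<lambda>b. F (mfrom 0 b)) = c lam0 * Q lam0" .
    have Qpos: "Q lam0 > 0"
    proof -
      have p: "is_partition lam0" using S(2) l0 by blast
      have "image_mset (nth (xsl lam0)) (mset_set {..<size lam0}) = mset al"
        using mset_nth_image[of "xsl lam0"] unfolding al_def by simp
      then show ?thesis unfolding Q_def by (subst Psi_antichain_pos[OF _ wpos_xsl[OF p]]) simp_all
    qed
    show ?thesis using ge e2 Qpos by (simp add: zero_le_mult_iff)
  qed
  show ?thesis unfolding p_positive_def F_def[symmetric]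
    using S nonneg Fe by blast
qed


end
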